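(* Let $\mathbf{X}\in\mathbb{R}^{N_X}$, $\mathbf{Y}\in\mathbb{R}^{N_Y}$ be zero-mean jointly Gaussian, and consider representations $\mathbf{T}_1=\mathbf{A}\mathbf{X}+\boldsymbol{\zeta}_1$, $\mathbf{T}_2=\mathbf{B}\mathbf{X}+\boldsymbol{\zeta}_2$, where $\boldsymbol{\zeta}_1\sim\mathcal N(0,\Sigma_{\zeta_1})$, $\boldsymbol{\zeta}_2\sim\mathcal N(0,\Sigma_{\zeta_2})$ are independent of each other and of $(\mathbf{X},\mathbf{Y})$. For given Lagrange parameters $(\beta,\lambda,\gamma)$ with $\beta,\lambda>0$, $\gamma\ge0$, the self-consistent equations for minimizing $\mathcal{F}=-I(\mathbf{Y};\mathbf{T}_1,\mathbf{T}_2)+\beta I(\mathbf{T}_1;\mathbf{X})+\lambda I(\mathbf{T}_2;\mathbf{X})+\gamma I(\mathbf{T}_1;\mathbf{T}_2)$, restricted to this Gaussian family, yield the following iterative procedure for $(\mathbf{A},\Sigma_{\zeta_1},\mathbf{B},\Sigma_{\zeta_2})$ at iteration $t$ (all quantities with superscript $(t)$ computed from $\mathbf{A}^{(t)},\Sigma_{\zeta_1}^{(t)},\mathbf{B}^{(t)},\Sigma_{\zeta_2}^{(t)}$ via the formulas in the context): $$\Sigma_{\zeta_1}^{-1\,(t+1)}=\Sigma_{T_1}^{-1\,(t)}-\frac{\gamma}{\beta}\Xi_1^{T(t)}\Sigma_{T_2|T_1}^{-1\,(t)}\Xi_1^{(t)}+\frac1\beta\Psi_1^{T(t)}\Sigma_{Y|T_1,T_2}^{-1\,(t)}\Psi_1^{(t)},$$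 $$\mathbf{A}^{(t+1)}=\Sigma_{\zeta_1}^{(t+1)}\Big[-\frac{\gamma}{\beta}\Xi_1^{T(t)}\Sigma_{T_2|T_1}^{-1\,(t)}\mathbf{B}^{(t)}+\frac1\beta\Psi_1^{T(t)}\Sigma_{Y|T_1,T_2}^{-1\,(t)}(\Theta-\Psi_2^{(t)}\mathbf{B}^{(t)})\Big],$$ $$\Sigma_{\zeta_2}^{-1\,(t+1)}=\Sigma_{T_2}^{-1\,(t)}-\frac{\gamma}{\lambda}\Xi_2^{T(t)}\Sigma_{T_1|T_2}^{-1\,(t)}\Xi_2^{(t)}+\frac1\lambda\Psi_2^{T(t)}\Sigma_{Y|T_1,T_2}^{-1\,(t)}\Psi_2^{(t)},$$ $$\mathbf{B}^{(t+1)}=\Sigma_{\zeta_2}^{(t+1)}\Big[-\frac{\gamma}{\lambda}\Xi_2^{T(t)}\Sigma_{T_1|T_2}^{-1\,(t)}\mathbf{A}^{(t+1)}+\frac1\lambda\Psi_2^{T(t)}\Sigma_{Y|T_1,T_2}^{-1\,(t)}(\Theta-\Psi_1^{(t)}\mathbf{A}^{(t+1)})\Big].$$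
   Context: Notation (all for current $\mathbf{A},\mathbf{B},\Sigma_{\zeta_1},\Sigma_{\zeta_2}$): $\Sigma_X$, $\Sigma_{YX}$ are the covariance and cross-covariance of $(\mathbf{X},\mathbf{Y})$; $\Theta=\Sigma_{YX}\Sigma_X^{-1}$; $\Sigma_{Y|X}$ is the conditional covariance of $\mathbf{Y}$ given $\mathbf{X}$. $\Sigma_{T_1}=\mathbf{A}\Sigma_X\mathbf{A}^T+\Sigma_{\zeta_1}$, $\Sigma_{T_2}=\mathbf{B}\Sigma_X\mathbf{B}^T+\Sigma_{\zeta_2}$. $\Sigma_{X|T_1}=(\Sigma_X^{-1}+\mathbf{A}^T\Sigma_{\zeta_1}^{-1}\mathbf{A})^{-1}$, $\Sigma_{X|T_2}=(\Sigma_X^{-1}+\mathbf{B}^T\Sigma_{\zeta_2}^{-1}\mathbf{B})^{-1}$, $\Sigma_{T_2|T_1}=\mathbf{B}\Sigma_{X|T_1}\mathbf{B}^T+\Sigma_{\zeta_2}$, $\Sigma_{T_1|T_2}=\mathbf{A}\Sigma_{X|T_2}\mathbf{A}^T+\Sigma_{\zeta_1}$. $\Xi_1=\mathbf{B}\Sigma_X\mathbf{A}^T\Sigma_{T_1}^{-1}$, $\Xi_2=\mathbf{A}\Sigma_X\mathbf{B}^T\Sigma_{T_2}^{-1}$. $\Psi_1=\Theta(\Sigma_X\mathbf{A}^T\Sigma_{T_1|T_2}^{-1}-\Sigma_X\mathbf{B}^T\Sigma_{T_2|T_1}^{-1}\mathbf{B}\Sigma_X\mathbf{A}^T\Sigma_{T_1}^{-1})$,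 $\Psi_2=\Theta(\Sigma_X\mathbf{B}^T\Sigma_{T_2|T_1}^{-1}-\Sigma_X\mathbf{A}^T\Sigma_{T_1|T_2}^{-1}\mathbf{A}\Sigma_X\mathbf{B}^T\Sigma_{T_2}^{-1})$. $\Sigma_{X|T_1,T_2}=\Sigma_X-\Sigma_X\mathbf{A}^T\Sigma_{T_1|T_2}^{-1}\mathbf{A}\Sigma_X+\Sigma_X\mathbf{A}^T\Sigma_{T_1|T_2}^{-1}\mathbf{A}\Sigma_X\mathbf{B}^T\Sigma_{T_2}^{-1}\mathbf{B}\Sigma_X+\Sigma_X\mathbf{B}^T\Sigma_{T_2|T_1}^{-1}\mathbf{B}\Sigma_X\mathbf{A}^T\Sigma_{T_1}^{-1}\mathbf{A}\Sigma_X-\Sigma_X\mathbf{B}^T\Sigma_{T_2|T_1}^{-1}\mathbf{B}\Sigma_X$, and $\Sigma_{Y|T_1,T_2}=\Theta\Sigma_{X|T_1,T_2}\Theta^T+\Sigma_{Y|X}$. The self-consistent equations referred to are: $p(t_1|x)\propto p(t_1)\exp\{\frac{\gamma}{\beta}D_{KL}[p(\mathbf{T}_2|x)\|p(\mathbf{T}_2|t_1)]-\frac1\beta\mathbb{E}_{\mathbf{T}_2|x}D_{KL}[p(\mathbf{Y}|x)\|p(\mathbf{Y}|t_1,\mathbf{T}_2)]\}$ and the symmetric one for $p(t_2|x)$ (with $\lambda$ in place of $\beta$), iterated by first updating $\mathbf{T}_1$ and then $\mathbf{T}_2$ using the updated $\mathbf{T}_1$. *)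

theory Defs
  imports "HOL-Analysis.Analysis"
begin

definition pos_def :: "real^'n^'n \<Rightarrow> bool" where
  "pos_def M \<longleftrightarrow> transpose M = M \<and> (\<forall>v. v \<noteq> 0 \<longrightarrow> v \<bullet> (M *v v) > 0)"

definition gauss_pdf :: "real^'n \<Rightarrow> real^'n^'n \<Rightarrow> real^'n \<Rightarrow> real" where
  "gauss_pdf m S v =
     exp (- ((v - m) \<bullet> (matrix_inv S *v (v - m))) / 2) / sqrt ((2 * pi) ^ CARD('n) * det S)"

definition KL :: "(real^'n \<Rightarrow> real) \<Rightarrow> (real^'n \<Rightarrow> real) \<Rightarrow> real" where
  "KL p q = (\<integral>v. p v * ln (p v / q v) \<partial>lborel)"

text \<open>Parameters: SX = Sigma_X, SY = Sigma_Y, SYX = Sigma_YX, A, Sz1 = Sigma_zeta1, B, Sz2 = Sigma_zeta2.\<close>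

definition Theta :: "real^'x^'x \<Rightarrow> real^'x^'y \<Rightarrow> real^'x^'y" where
  "Theta SX SYX = SYX ** matrix_inv SX"

definition S_YgX :: "real^'x^'x \<Rightarrow> real^'y^'y \<Rightarrow> real^'x^'y \<Rightarrow> real^'y^'y" where
  "S_YgX SX SY SYX = SY - SYX ** matrix_inv SX ** transpose SYX"

definition S_T :: "real^'x^'x \<Rightarrow> real^'x^'a \<Rightarrow> real^'a^'a \<Rightarrow> real^'a^'a" where
  "S_T SX A Sz = A ** SX ** transpose A + Sz"

definition S_XgT :: "real^'x^'x \<Rightarrow> real^'x^'a \<Rightarrow> real^'a^'a \<Rightarrow> real^'x^'x" where
  "S_XgT SX A Sz = matrix_inv (matrix_inv SX + transpose A ** matrix_inv Sz ** A)"

text \<open>S_T2gT1 SX A Sz1 B Sz2 = Sigma_{T2|T1} = B Sigma_{X|T1} B^T + Sigma_zeta2;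
  by symmetry Sigma_{T1|T2} = S_T2gT1 SX B Sz2 A Sz1.\<close>
definition S_T2gT1 :: "real^'x^'x \<Rightarrow> real^'x^'a \<Rightarrow> real^'a^'a \<Rightarrow> real^'x^'b \<Rightarrow> real^'b^'b \<Rightarrow> real^'b^'b" where
  "S_T2gT1 SX A Sz1 B Sz2 = B ** S_XgT SX A Sz1 ** transpose B + Sz2"

text \<open>Xi1 = Xi SX A Sz1 B, Xi2 = Xi SX B Sz2 A.\<close>
definition Xi :: "real^'x^'x \<Rightarrow> real^'x^'a \<Rightarrow> real^'a^'a \<Rightarrow> real^'x^'b \<Rightarrow> real^'a^'b" where
  "Xi SX A Sz1 B = B ** SX ** transpose A ** matrix_inv (S_T SX A Sz1)"

text \<open>Psi1 = Psi SX SYX A Sz1 B Sz2, Psi2 = Psi SX SYX B Sz2 A Sz1.\<close>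
definition Psi :: "real^'x^'x \<Rightarrow> real^'x^'y \<Rightarrow> real^'x^'a \<Rightarrow> real^'a^'a \<Rightarrow> real^'x^'b \<Rightarrow> real^'b^'b \<Rightarrow> real^'a^'y" where
  "Psi SX SYX A Sz1 B Sz2 = Theta SX SYX **
     (SX ** transpose A ** matrix_inv (S_T2gT1 SX B Sz2 A Sz1)
      - SX ** transpose B ** matrix_inv (S_T2gT1 SX A Sz1 B Sz2) ** B ** SX ** transpose A
          ** matrix_inv (S_T SX A Sz1))"

definition S_XgT12 :: "real^'x^'x \<Rightarrow> real^'x^'a \<Rightarrow> real^'a^'a \<Rightarrow> real^'x^'b \<Rightarrow> real^'b^'b \<Rightarrow> real^'x^'x" where
  "S_XgT12 SX A Sz1 B Sz2 =
     SX
     - SX ** transpose A ** matrix_inv (S_T2gT1 SX B Sz2 A Sz1) ** A ** SX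
     + SX ** transpose A ** matrix_inv (S_T2gT1 SX B Sz2 A Sz1) ** A ** SX ** transpose B
         ** matrix_inv (S_T SX B Sz2) ** B ** SX
     + SX ** transpose B ** matrix_inv (S_T2gT1 SX A Sz1 B Sz2) ** B ** SX ** transpose A
         ** matrix_inv (S_T SX A Sz1) ** A ** SX
     - SX ** transpose B ** matrix_inv (S_T2gT1 SX A Sz1 B Sz2) ** B ** SX"

definition S_YgT12 :: "real^'x^'x \<Rightarrow> real^'y^'y \<Rightarrow> real^'x^'y \<Rightarrow> real^'x^'a \<Rightarrow> real^'a^'a \<Rightarrow> real^'x^'b \<Rightarrow> real^'b^'b \<Rightarrow> real^'y^'y" where
  "S_YgT12 SX SY SYX A Sz1 B Sz2 =
     Theta SX SYX ** S_XgT12 SX A Sz1 B Sz2 ** transpose (Theta SX SYX) + S_YgX SX SY SYX"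

text \<open>sc_rhs SX SY SYX A Sz1 B Sz2 Anew Sznew beta gamma x t1 =
  p(t1) * exp( gamma/beta * KL[p(T2|x) || p(T2|t1)]
               - 1/beta * E_{T2|x} KL[p(Y|x) || p(Y|t1,T2)] ),
  where p(t1), p(T2|t1), p(Y|t1,t2) are the Gaussian (conditional) densities of the
  model with parameters (A,Sz1,B,Sz2), and p(T2|x) = N(Bnew x, Sznew).
  For the T1-update Bnew = B, Sznew = Sz2; for the T2-update (roles swapped) the
  conditional p(T1|x) is the already-updated one.\<close>
definition sc_rhs ::
  "real^'x^'x \<Rightarrow> real^'y^'y \<Rightarrow> real^'x^'y \<Rightarrow> real^'x^'a \<Rightarrow> real^'a^'a \<Rightarrow> real^'x^'b \<Rightarrow> real^'b^'b
   \<Rightarrow> real^'x^'b \<Rightarrow> real^'b^'b \<Rightarrow> real \<Rightarrow> real \<Rightarrow> real^'x \<Rightarrow> real^'a \<Rightarrow> real" where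
  "sc_rhs SX SY SYX A Sz1 B Sz2 Bnew Sznew bet gam x t1 =
     gauss_pdf 0 (S_T SX A Sz1) t1 *
     exp (gam / bet * KL (gauss_pdf (Bnew *v x) Sznew)
                         (gauss_pdf (Xi SX A Sz1 B *v t1) (S_T2gT1 SX A Sz1 B Sz2))
          - 1 / bet * (\<integral>t2. gauss_pdf (Bnew *v x) Sznew t2 *
                 KL (gauss_pdf (Theta SX SYX *v x) (S_YgX SX SY SYX))
                    (gauss_pdf (Psi SX SYX A Sz1 B Sz2 *v t1 + Psi SX SYX B Sz2 A Sz1 *v t2)
                               (S_YgT12 SX SY SYX A Sz1 B Sz2)) \<partial>lborel))"

end

theory Submission
  imports Defs "HOL-Probability.Distributions"
begin

definition qf :: "'n set \<Rightarrow> real^'n^'n \<Rightarrow> ('n \<Rightarrow> real) \<Rightarrow> real" where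
  "qf I M x = (\<Sum>i\<in>I. \<Sum>j\<in>I. x i * M$i$j * x j)"

definition pdI :: "'n set \<Rightarrow> real^'n^'n \<Rightarrow> bool" where
  "pdI I M \<longleftrightarrow> (\<forall>i\<in>I. \<forall>j\<in>I. M$i$j = M$j$i) \<and> (\<forall>x. (\<exists>i\<in>I. x i \<noteq> 0) \<longrightarrow> qf I M x > 0)"

definition extm :: "'n set \<Rightarrow> real^'n^'n \<Rightarrow> real^'n^'n" where
  "extm I M = (\<chi> i j. if i \<in> I \<and> j \<in> I then M$i$j else if i = j then 1 else 0)"

definition schur :: "'n \<Rightarrow> real^'n^'n \<Rightarrow> real^'n^'n" where
  "schur k M = (\<chi> i j. M$i$j - M$i$k * M$k$j / M$k$k)"

lemma rowops:
  fixes A :: "real^'n^'n"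
  assumes "finite J" "k \<notin> J"
  shows "det (\<chi> r. if r \<in> J then row r A - c r *s row k A else row r A) = det A"
  using assms
proof (induction J rule: finite_induct)
  case empty
  then show ?case by (simp add: row_def vec_lambda_eta)
next
  case (insert i J)
  define A' where "A' = (\<chi> r. if r \<in> J then row r A - c r *s row k A else row r A)"
  have ik: "i \<noteq> k" using insert by auto
  have rk: "row k A' = row k A" using insert by (simp add: A'_def row_def)
  have ri: "row i A' = row i A" using insert by (simp add: A'_def row_def)
  have eq: "(\<chi> r. if r \<in> insert i J then row r A - c r *s row k A else row r A)
      = (\<chi> r. if r = i then row i A' + (- c i) *s row k A' else row r A')"
    using insert by (auto simp: vec_eq_iff rk ri A'_def row_def)
  show ?case unfolding eq
    using det_row_operation[OF ik, of A' "- c i"] insert by (simp add: A'_def)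
qed

lemma det_extm_insert:
  fixes M :: "real^'n^'n"
  assumes "finite I" "k \<notin> I" "M$k$k \<noteq> 0"
  shows "det (extm (insert k I) M) = M$k$k * det (extm I (schur k M))"
proof -
  define E where "E = extm (insert k I) M"
  define R where "R = (\<chi> r. if r \<in> I then row r E - (E$r$k / E$k$k) *s row k E else row r E)"
  have d1: "det R = det E" unfolding R_def by (rule rowops[OF assms(1,2)])
  define R2 where "R2 = (\<chi> r. if r \<in> I then row r (transpose R) - (R$k$r / R$k$k) *s row k (transpose R) else row r (transpose R))"
  have d2: "det R2 = det (transpose R)" unfolding R2_def by (rule rowops[OF assms(1,2)])
  define G where "G = transpose (extm I (schur k M))"
  have eq: "R2 = (\<chi> i. if i = k then M$k$k *s row i G else row i G)"
    using assms
    by (auto simp: vec_eq_iff R2_def R_def E_def G_def extm_def schur_def row_def transpose_def)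
  have "det R2 = M$k$k * det G"
    unfolding eq det_row_mul by (simp add: row_def vec_lambda_eta)
  then show ?thesis using d1 d2 by (simp add: det_transpose G_def E_def)
qed


lemma qf_insert:
  fixes M :: "real^'n^'n"
  assumes "finite I" "k \<notin> I" "\<forall>i\<in>insert k I. \<forall>j\<in>insert k I. M$i$j = M$j$i"
  shows "qf (insert k I) M (x(k:=y)) = M$k$k*y^2 + 2*y*(\<Sum>j\<in>I. M$k$j * x j) + qf I M x"
proof -
  define z where "z = x(k:=y)"
  have xk: "\<And>j. j \<in> I \<Longrightarrow> z j = x j" "z k = y" using assms by (auto simp: z_def)
  have "qf (insert k I) M z = (\<Sum>j\<in>insert k I. z k * M$k$j * z j) + (\<Sum>i\<in>I. \<Sum>j\<in>insert k I. z i * M$i$j * z j)"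
    unfolding qf_def using assms(1,2) by (simp add: sum.insert)
  also have "(\<Sum>j\<in>insert k I. z k * M$k$j * z j) = y * M$k$k * y + (\<Sum>j\<in>I. y * M$k$j * x j)"
    using assms(1,2) by (simp add: sum.insert xk)
  also have "(\<Sum>i\<in>I. \<Sum>j\<in>insert k I. z i * M$i$j * z j) = (\<Sum>i\<in>I. x i * M$i$k * y + (\<Sum>j\<in>I. x i * M$i$j * x j))"
    using assms(1,2) by (intro sum.cong) (simp_all add: sum.insert xk)
  also have "\<dots> = (\<Sum>i\<in>I. x i * M$i$k * y) + qf I M x"
    by (simp add: sum.distrib qf_def)
  also have "(\<Sum>i\<in>I. x i * M$i$k * y) = y * (\<Sum>j\<in>I. M$k$j * x j)"
  proof -
    have sym: "\<And>i. i\<in>I \<Longrightarrow> M$i$k = M$k$i" using assms(3) by blast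
    show ?thesis unfolding sum_distrib_left by (rule sum.cong) (simp_all add: sym)
  qed
  also have "(\<Sum>j\<in>I. y * M$k$j * x j) = y * (\<Sum>j\<in>I. M$k$j * x j)"
    by (simp add: sum_distrib_left mult_ac)
  finally have "qf (insert k I) M z = y * M$k$k * y + y * (\<Sum>j\<in>I. M$k$j * x j) + (y * (\<Sum>j\<in>I. M$k$j * x j) + qf I M x)" .
  then show ?thesis unfolding z_def[symmetric] by (simp add: power2_eq_square algebra_simps)
qed

lemma qf_schur:
  fixes M :: "real^'n^'n"
  assumes "finite I" "M$k$k \<noteq> 0" "\<forall>i\<in>I. M$i$k = M$k$i"
  shows "qf I (schur k M) x = qf I M x - (\<Sum>j\<in>I. M$k$j * x j)^2 / M$k$k"
proof -
  have "qf I (schur k M) x = (\<Sum>i\<in>I. \<Sum>j\<in>I. x i * M$i$j * x j - (x i * M$k$i) * (M$k$j * x j) / M$k$k)"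
  proof -
    have sym: "\<And>i. i\<in>I \<Longrightarrow> M$i$k = M$k$i" using assms(3) by blast
    show ?thesis unfolding qf_def schur_def by (intro sum.cong refl) (simp add: sym field_simps)
  qed
  also have "\<dots> = qf I M x - (\<Sum>i\<in>I. \<Sum>j\<in>I. (x i * M$k$i) * (M$k$j * x j)) / M$k$k"
    by (simp add: qf_def sum_subtractf sum_divide_distrib)
  also have "(\<Sum>i\<in>I. \<Sum>j\<in>I. (x i * M$k$i) * (M$k$j * x j)) = (\<Sum>j\<in>I. M$k$j * x j)^2"
    by (simp add: power2_eq_square sum_product mult_ac)
  finally show ?thesis .
qed

lemma nn_gauss1:
  fixes a c :: real
  assumes "a > 0"
  shows "(\<integral>\<^sup>+y. ennreal (exp (-(a*(y+c)^2)/2)) \<partial>lborel) = ennreal (sqrt (2*pi/a))"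
proof -
  define s where "s = 1 / sqrt a"
  have s: "s > 0" using assms by (simp add: s_def)
  have s2: "s^2 = 1/a" using assms by (simp add: s_def power_divide)
  have eq: "\<And>y. exp (-(a*(y+c)^2)/2) = sqrt (2*pi/a) * normal_density (-c) s y"
    using assms unfolding normal_density_def s2
    by (simp add: real_sqrt_divide field_simps)
  have "(\<integral>\<^sup>+y. ennreal (exp (-(a*(y+c)^2)/2)) \<partial>lborel)
      = (\<integral>\<^sup>+y. ennreal (sqrt (2*pi/a)) * ennreal (normal_density (-c) s y) \<partial>lborel)"
    unfolding eq by (intro nn_integral_cong ennreal_mult) (use assms in auto)
  also have "\<dots> = ennreal (sqrt (2*pi/a)) * (\<integral>\<^sup>+y. ennreal (normal_density (-c) s y) \<partial>lborel)"
    by (rule nn_integral_cmult) simp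
  also have "(\<integral>\<^sup>+y. ennreal (normal_density (-c) s y) \<partial>lborel) = 1"
    using s by (simp add: nn_integral_eq_integral)
  finally show ?thesis by simp
qed


lemma qf_meas:
  "(\<lambda>x. qf J M x) \<in> borel_measurable (PiM J (\<lambda>_. lborel))"
  unfolding qf_def
proof (intro borel_measurable_sum borel_measurable_times borel_measurable_const)
  fix i j assume "i \<in> J" "j \<in> J"
  then show "(\<lambda>x. x i) \<in> borel_measurable (PiM J (\<lambda>_. lborel))"
    "(\<lambda>x. x j) \<in> borel_measurable (PiM J (\<lambda>_. lborel))"
    by measurable
qed

lemma extm_empty: "extm {} M = mat 1"
  by (simp add: extm_def vec_eq_iff mat_def)

lemma gauss_PiM:
  fixes M :: "real^'n^'n"
  assumes "finite I" "pdI I M"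
  shows "det (extm I M) > 0 \<and> (\<integral>\<^sup>+x. ennreal (exp (- qf I M x / 2)) \<partial>PiM I (\<lambda>_. lborel))
           = ennreal (sqrt ((2*pi)^card I / det (extm I M)))"
  using assms
proof (induction I arbitrary: M rule: finite_induct)
  case empty
  then show ?case by (simp add: PiM_empty qf_def extm_empty)
next
  case (insert k I)
  interpret product_sigma_finite "\<lambda>_::'n. lborel :: real measure"
    by standard
  have sym: "\<forall>i\<in>insert k I. \<forall>j\<in>insert k I. M$i$j = M$j$i"
    using insert.prems unfolding pdI_def by blast
  have pos: "\<And>x. (\<exists>i\<in>insert k I. x i \<noteq> 0) \<Longrightarrow> qf (insert k I) M x > 0"
    using insert.prems unfolding pdI_def by blast
  have q0: "qf I M (\<lambda>_. 0) = 0" by (simp add: qf_def)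
  have "qf (insert k I) M ((\<lambda>_. 0)(k:=1)) = M$k$k"
    using qf_insert[OF insert.hyps sym, of "\<lambda>_. 0" 1] q0 by simp
  moreover have "qf (insert k I) M ((\<lambda>_. 0)(k:=1)) > 0"
    by (rule pos) auto
  ultimately have a: "M$k$k > 0" by simp
  define b where "b x = (\<Sum>j\<in>I. M$k$j * x j)" for x :: "'n \<Rightarrow> real"
  have symk: "\<forall>i\<in>I. M$i$k = M$k$i" using sym by blast
  have qs: "qf I (schur k M) x = qf I M x - (b x)^2 / M$k$k" for x
    unfolding b_def by (rule qf_schur[OF insert.hyps(1)]) (use a symk in auto)
  have key: "qf (insert k I) M (x(k:=y)) = M$k$k * (y + b x / M$k$k)^2 + qf I (schur k M) x" for x y
    unfolding qs qf_insert[OF insert.hyps sym] b_def[symmetric] using a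
    by (simp add: field_simps power2_eq_square)
  have pd': "pdI I (schur k M)"
    unfolding pdI_def
  proof safe
    fix i j assume "i \<in> I" "j \<in> I"
    have e: "M$i$j = M$j$i" "M$i$k = M$k$i" "M$j$k = M$k$j"
      using sym \<open>i \<in> I\<close> \<open>j \<in> I\<close> by blast+
    have "schur k M $ i $ j = M$i$j - M$i$k*M$k$j/M$k$k" "schur k M $ j $ i = M$j$i - M$j$k*M$k$i/M$k$k"
      by (simp_all add: schur_def)
    then show "schur k M $ i $ j = schur k M $ j $ i"
      by (metis e mult.commute)
  next
    fix x :: "'n \<Rightarrow> real" and i assume i: "i \<in> I" "x i \<noteq> 0"
    have "qf (insert k I) M (x(k := - b x / M$k$k)) > 0"
      using i insert.hyps by (intro pos) (auto intro!: bexI[of _ i])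
    then show "qf I (schur k M) x > 0" unfolding key by simp
  qed
  from insert.IH[OF pd'] have IH: "det (extm I (schur k M)) > 0"
    "(\<integral>\<^sup>+x. ennreal (exp (- qf I (schur k M) x / 2)) \<partial>PiM I (\<lambda>_. lborel))
           = ennreal (sqrt ((2*pi)^card I / det (extm I (schur k M))))" by auto
  have det: "det (extm (insert k I) M) = M$k$k * det (extm I (schur k M))"
    using det_extm_insert[OF insert.hyps] a by simp
  have meas: "(\<lambda>x. ennreal (exp (- qf J M' x / 2))) \<in> borel_measurable (PiM J (\<lambda>_. lborel))" for J and M' :: "real^'n^'n"
    using qf_meas[of J M'] by measurable
  have "(\<integral>\<^sup>+x. ennreal (exp (- qf (insert k I) M x / 2)) \<partial>PiM (insert k I) (\<lambda>_. lborel))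
     = (\<integral>\<^sup>+x. (\<integral>\<^sup>+y. ennreal (exp (- qf (insert k I) M (x(k:=y)) / 2)) \<partial>lborel) \<partial>PiM I (\<lambda>_. lborel))"
    by (rule product_nn_integral_insert[OF insert.hyps meas])
  also have "\<dots> = (\<integral>\<^sup>+x. ennreal (sqrt (2*pi/M$k$k)) * ennreal (exp (- qf I (schur k M) x / 2)) \<partial>PiM I (\<lambda>_. lborel))"
  proof (rule nn_integral_cong)
    fix x
    have "(\<integral>\<^sup>+y. ennreal (exp (- qf (insert k I) M (x(k:=y)) / 2)) \<partial>lborel)
        = (\<integral>\<^sup>+y. ennreal (exp (-(M$k$k*(y + b x / M$k$k)^2)/2)) * ennreal (exp (- qf I (schur k M) x / 2)) \<partial>lborel)"
      unfolding key by (intro nn_integral_cong) (simp add: ennreal_mult[symmetric] exp_add[symmetric] field_simps)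
    also have "\<dots> = (\<integral>\<^sup>+y. ennreal (exp (-(M$k$k*(y + b x / M$k$k)^2)/2)) \<partial>lborel) * ennreal (exp (- qf I (schur k M) x / 2))"
      by (rule nn_integral_multc) measurable
    also have "\<dots> = ennreal (sqrt (2*pi/M$k$k)) * ennreal (exp (- qf I (schur k M) x / 2))"
      using nn_gauss1[OF a] by simp
    finally show "(\<integral>\<^sup>+y. ennreal (exp (- qf (insert k I) M (x(k:=y)) / 2)) \<partial>lborel)
        = ennreal (sqrt (2*pi/M$k$k)) * ennreal (exp (- qf I (schur k M) x / 2))" .
  qed
  also have "\<dots> = ennreal (sqrt (2*pi/M$k$k)) * (\<integral>\<^sup>+x. ennreal (exp (- qf I (schur k M) x / 2)) \<partial>PiM I (\<lambda>_. lborel))"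
    by (rule nn_integral_cmult[OF meas])
  also have "\<dots> = ennreal (sqrt ((2*pi)^card (insert k I) / det (extm (insert k I) M)))"
    unfolding IH(2) det using insert.hyps a IH(1)
    by (simp add: ennreal_mult[symmetric] real_sqrt_mult[symmetric] field_simps)
  finally show ?case using det a IH(1) by simp
qed


lemma vec_meas: "(\<lambda>x. \<chi> i. x i) \<in> measurable (PiM UNIV (\<lambda>_::'n::finite. lborel)) (borel :: (real^'n) measure)"
proof (subst borel_measurable_euclidean_space, safe)
  fix b :: "real^'n" assume "b \<in> Basis"
  then obtain j where b: "b = axis j 1" by (auto simp: Basis_vec_def)
  show "(\<lambda>x. (\<chi> i. x i) \<bullet> b) \<in> borel_measurable (PiM UNIV (\<lambda>_::'n. lborel))"
    unfolding b inner_axis by simp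
qed

lemma mvec_meas[measurable]: "(\<lambda>v. (P :: real^'n::finite^'m::finite) *v v) \<in> borel_measurable borel"
  by (intro borel_measurable_continuous_onI linear_continuous_on matrix_vector_mul_bounded_linear)

lemma prod_Basis_vec: "(\<Prod>b\<in>(Basis :: (real^'n::finite) set). f b) = (\<Prod>i\<in>UNIV. f (axis i 1))"
proof -
  have B: "(Basis :: (real^'n) set) = (\<lambda>i. axis i 1) ` UNIV" by (auto simp: Basis_vec_def)
  have i: "inj (\<lambda>i::'n. axis i (1::real))" by (auto simp: inj_def axis_eq_axis)
  show ?thesis unfolding B using prod.reindex[OF i, of f] by (simp add: o_def)
qed

lemma lborel_vec: "distr (PiM UNIV (\<lambda>_::'n::finite. lborel)) borel (\<lambda>x. \<chi> i. x i) = (lborel :: (real^'n) measure)"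
proof (rule lborel_eqI[symmetric])
  fix l u :: "real^'n" assume le: "\<And>b. b \<in> Basis \<Longrightarrow> l \<bullet> b \<le> u \<bullet> b"
  have le': "l$i \<le> u$i" for i using le[of "axis i 1"] by (auto simp: Basis_vec_def inner_axis)
  have pre: "(\<lambda>x. \<chi> i. x i) -` box l u \<inter> space (PiM UNIV (\<lambda>_::'n. lborel)) = PiE UNIV (\<lambda>i. {l$i<..<u$i})"
    by (auto simp: box_def Basis_vec_def inner_axis space_PiM PiE_def extensional_def)
  interpret finite_product_sigma_finite "\<lambda>_::'n. lborel :: real measure" UNIV
    by standard simp
  have "emeasure (distr (PiM UNIV (\<lambda>_::'n. lborel)) borel (\<lambda>x. \<chi> i. x i)) (box l u)
      = emeasure (PiM UNIV (\<lambda>_::'n. lborel)) (PiE UNIV (\<lambda>i. {l$i<..<u$i}))"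
    by (subst emeasure_distr[OF vec_meas]) (simp_all add: pre)
  also have "\<dots> = (\<Prod>i\<in>UNIV. emeasure lborel {l$i<..<u$i})"
    by (rule measure_times) simp
  also have "\<dots> = (\<Prod>i\<in>UNIV. ennreal (u$i - l$i))"
    using le' by (simp add: emeasure_lborel_Ioo)
  also have "\<dots> = ennreal (\<Prod>i\<in>UNIV. (u$i - l$i))"
    using le' by (simp add: prod_ennreal)
  also have "(\<Prod>i\<in>UNIV. (u$i - l$i)) = (\<Prod>b\<in>Basis. (u - l) \<bullet> b)"
    by (simp add: prod_Basis_vec inner_axis)
  finally show "emeasure (distr (PiM UNIV (\<lambda>_::'n. lborel)) borel (\<lambda>x. \<chi> i. x i)) (box l u) = (\<Prod>b\<in>Basis. (u - l) \<bullet> b)" .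
qed simp

lemma qf_vec: "(\<chi> i. x i) \<bullet> (P *v (\<chi> i. x i)) = qf UNIV P x"
  by (simp add: qf_def inner_vec_def matrix_vector_mult_def sum_distrib_left mult_ac)

lemma qf_vec': "v \<bullet> (P *v v) = qf UNIV P (\<lambda>i. v$i)"
  using qf_vec[of "\<lambda>i. v$i" P] by (simp add: vec_lambda_eta)

lemma pos_def_pdI: "pos_def P \<Longrightarrow> pdI UNIV P"
  unfolding pdI_def
proof safe
  assume "pos_def P"
  then have "transpose P = P" by (simp add: pos_def_def)
  then show "P$i$j = P$j$i" for i j by (metis transpose_def vec_lambda_beta)
next
  fix x :: "'a \<Rightarrow> real" and i assume "pos_def P" "x i \<noteq> 0"
  then have "(\<chi> i. x i) \<noteq> 0" by (metis vec_lambda_beta zero_index)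
  with \<open>pos_def P\<close> have "(\<chi> i. x i) \<bullet> (P *v (\<chi> i. x i)) > 0" by (simp add: pos_def_def)
  then show "qf UNIV P x > 0" by (simp add: qf_vec)
qed

lemma extm_UNIV: "extm UNIV M = M"
  by (simp add: extm_def vec_eq_iff)

lemma gauss_vec:
  fixes P :: "real^'n^'n"
  assumes "pos_def P"
  shows "det P > 0 \<and> (\<integral>\<^sup>+v. ennreal (exp (- (v \<bullet> (P *v v)) / 2)) \<partial>lborel) = ennreal (sqrt ((2*pi)^CARD('n) / det P))"
proof -
  have g: "det (extm UNIV P) > 0 \<and> (\<integral>\<^sup>+x. ennreal (exp (- qf UNIV P x / 2)) \<partial>PiM UNIV (\<lambda>_. lborel))
           = ennreal (sqrt ((2*pi)^card (UNIV::'n set) / det (extm UNIV P)))"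
    by (rule gauss_PiM[OF _ pos_def_pdI[OF assms]]) simp
  have "(\<integral>\<^sup>+v. ennreal (exp (- (v \<bullet> (P *v v)) / 2)) \<partial>lborel)
      = (\<integral>\<^sup>+v. ennreal (exp (- (v \<bullet> (P *v v)) / 2)) \<partial>distr (PiM UNIV (\<lambda>_::'n. lborel)) borel (\<lambda>x. \<chi> i. x i))"
    by (simp add: lborel_vec)
  also have "\<dots> = (\<integral>\<^sup>+x. ennreal (exp (- qf UNIV P x / 2)) \<partial>PiM UNIV (\<lambda>_. lborel))"
    by (subst nn_integral_distr[OF vec_meas]) (measurable, simp add: qf_vec)
  finally show ?thesis using g by (simp add: extm_UNIV)
qed

lemma nn_integral_shift:
  fixes f :: "real^'n \<Rightarrow> ennreal"
  assumes "f \<in> borel_measurable borel"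
  shows "(\<integral>\<^sup>+v. f (v - m) \<partial>lborel) = (\<integral>\<^sup>+v. f v \<partial>lborel)"
proof -
  have "(\<integral>\<^sup>+v. f v \<partial>lborel) = (\<integral>\<^sup>+v. f v \<partial>distr lborel borel ((+) (- m)))"
    by (simp add: lborel_distr_plus)
  also have "\<dots> = (\<integral>\<^sup>+v. f (- m + v) \<partial>lborel)"
    by (rule nn_integral_distr) (simp_all add: assms)
  finally show ?thesis by simp
qed


lemma inv_mat:
  fixes S :: "real^'n^'n"
  assumes "invertible S"
  shows "S ** matrix_inv S = mat 1" "matrix_inv S ** S = mat 1"
proof -
  from assms obtain A' where "S ** A' = mat 1 \<and> A' ** S = mat 1" unfolding invertible_def by blast
  then have "S ** matrix_inv S = mat 1 \<and> matrix_inv S ** S = mat 1"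
    unfolding matrix_inv_def by (rule someI)
  then show "S ** matrix_inv S = mat 1" "matrix_inv S ** S = mat 1" by auto
qed

lemma inv_unique:
  fixes S :: "real^'n^'n"
  assumes "S ** B = mat 1"
  shows "matrix_inv S = B" "invertible S"
proof -
  have "B ** S = mat 1" using assms matrix_left_right_inverse by blast
  then show "invertible S" using assms unfolding invertible_def by blast
  then have "matrix_inv S ** S = mat 1" by (rule inv_mat)
  then have "matrix_inv S ** (S ** B) = B" by (simp add: matrix_mul_assoc)
  then show "matrix_inv S = B" using assms by simp
qed

lemma inv_inv: "invertible (S::real^'n^'n) \<Longrightarrow> matrix_inv (matrix_inv S) = S"
  using inv_mat(2) inv_unique(1) by blast

lemma inv_invertible: "invertible (S::real^'n^'n) \<Longrightarrow> invertible (matrix_inv S)"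
  using inv_mat(2) inv_unique(2) by blast

lemma inv_transpose: "invertible (S::real^'n^'n) \<Longrightarrow> matrix_inv (transpose S) = transpose (matrix_inv S)"
  by (metis inv_mat(2) inv_unique(1) matrix_transpose_mul transpose_mat)

lemma pos_def_sym: "pos_def S \<Longrightarrow> transpose S = S"
  by (simp add: pos_def_def)

lemma pos_def_pos: "pos_def S \<Longrightarrow> v \<noteq> 0 \<Longrightarrow> v \<bullet> (S *v v) > 0"
  by (simp add: pos_def_def)

lemma pos_def_invertible:
  fixes S :: "real^'n^'n"
  assumes "pos_def S" shows "invertible S"
proof -
  have "\<forall>x. S *v x = 0 \<longrightarrow> x = 0"
    using pos_def_pos[OF assms] by (metis inner_zero_right less_irrefl)
  then show ?thesis
    using matrix_left_invertible_ker invertible_left_inverse by blast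
qed

lemma inner_transpose: "((A::real^'n^'m) *v a) \<bullet> b = a \<bullet> (transpose A *v b)"
  using dot_lmul_matrix[of a "transpose A" b] by (simp only: vector_transpose_matrix)

lemma sym_inner: "transpose W = W \<Longrightarrow> ((W::real^'n^'n) *v a) \<bullet> b = a \<bullet> (W *v b)"
  using inner_transpose[of W a b] by simp

lemma pos_def_inv:
  fixes S :: "real^'n^'n"
  assumes "pos_def S" shows "pos_def (matrix_inv S)"
  unfolding pos_def_def
proof safe
  have i: "invertible S" by (rule pos_def_invertible[OF assms])
  show "transpose (matrix_inv S) = matrix_inv S"
    using inv_transpose[OF i] pos_def_sym[OF assms] by simp
next
  fix v :: "real^'n" assume v: "v \<noteq> 0"
  have i: "invertible S" by (rule pos_def_invertible[OF assms])
  define w where "w = matrix_inv S *v v"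
  have Sw: "S *v w = v" using inv_mat(1)[OF i] by (simp add: w_def matrix_vector_mul_assoc)
  have "w \<noteq> 0" using v Sw by auto
  then have "w \<bullet> (S *v w) > 0" by (rule pos_def_pos[OF assms])
  then show "v \<bullet> (matrix_inv S *v v) > 0" using Sw by (simp add: w_def inner_commute)
qed

lemma det_inv:
  fixes S :: "real^'n^'n"
  assumes "invertible S" shows "det (matrix_inv S) = 1 / det S"
proof -
  have h: "det S * det (matrix_inv S) = 1" using inv_mat(1)[OF assms] det_mul[of S "matrix_inv S"] by simp
  then have "det S \<noteq> 0" by auto
  then show ?thesis using h by (simp add: field_simps mult.commute)
qed

lemma pos_def_det: "pos_def (S::real^'n^'n) \<Longrightarrow> det S > 0"
  using gauss_vec by blast

lemma gauss_pdf_meas[measurable]: "gauss_pdf m S \<in> borel_measurable borel"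
  unfolding gauss_pdf_def[abs_def] by measurable

lemma gauss_pos: "pos_def S \<Longrightarrow> gauss_pdf m S v > 0"
  using pos_def_det[of S] by (simp add: gauss_pdf_def)

lemma gauss_nn:
  fixes S :: "real^'n^'n"
  assumes "pos_def S"
  shows "(\<integral>\<^sup>+v. ennreal (gauss_pdf m S v) \<partial>lborel) = 1"
proof -
  define P where "P = matrix_inv S"
  define Z where "Z = sqrt ((2*pi)^CARD('n) * det S)"
  have dS: "det S > 0" by (rule pos_def_det[OF assms])
  have Z: "Z > 0" using dS by (simp add: Z_def)
  have P: "pos_def P" unfolding P_def by (rule pos_def_inv[OF assms])
  have dP: "det P = 1 / det S" unfolding P_def by (rule det_inv[OF pos_def_invertible[OF assms]])
  have "(\<integral>\<^sup>+v. ennreal (gauss_pdf m S v) \<partial>lborel)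
      = (\<integral>\<^sup>+v. ennreal (1/Z) * ennreal (exp (- ((v - m) \<bullet> (P *v (v - m)))/2)) \<partial>lborel)"
    using Z by (intro nn_integral_cong) (simp add: gauss_pdf_def P_def Z_def ennreal_mult[symmetric])
  also have "\<dots> = ennreal (1/Z) * (\<integral>\<^sup>+v. ennreal (exp (- ((v - m) \<bullet> (P *v (v - m)))/2)) \<partial>lborel)"
    by (rule nn_integral_cmult) measurable
  also have "(\<integral>\<^sup>+v. ennreal (exp (- ((v - m) \<bullet> (P *v (v - m)))/2)) \<partial>lborel)
      = (\<integral>\<^sup>+v. ennreal (exp (- (v \<bullet> (P *v v))/2)) \<partial>lborel)"
    by (rule nn_integral_shift[where f="\<lambda>v. ennreal (exp (- (v \<bullet> (P *v v))/2))"]) measurable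
  also have "\<dots> = ennreal (sqrt ((2*pi)^CARD('n) / det P))"
    using gauss_vec[OF P] by simp
  also have "sqrt ((2*pi)^CARD('n) / det P) = Z"
    unfolding dP Z_def by simp
  finally show ?thesis using Z by (simp add: ennreal_mult[symmetric])
qed

lemma gauss_integrable1: "pos_def S \<Longrightarrow> integrable lborel (gauss_pdf m S)"
  by (rule integrableI_nn_integral_finite[where x=1]) (auto simp: gauss_nn less_imp_le[OF gauss_pos])

lemma gauss_integral1: "pos_def S \<Longrightarrow> (\<integral>v. gauss_pdf m S v \<partial>lborel) = 1"
  using gauss_nn[of S m] gauss_integrable1[of S m]
  by (subst integral_eq_nn_integral) (auto simp: less_imp_le[OF gauss_pos])


lemma mv_cont: "continuous_on UNIV (\<lambda>v. (P::real^'n^'m) *v v)"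
  by (rule linear_continuous_on[OF matrix_vector_mul_bounded_linear])

lemma pd_lower:
  fixes P :: "real^'n^'n"
  assumes "pos_def P"
  shows "\<exists>c>0. \<forall>v. c * norm v ^ 2 \<le> v \<bullet> (P *v v)"
proof -
  define f where "f v = v \<bullet> (P *v v)" for v :: "real^'n"
  have cont: "continuous_on (sphere 0 1) f"
    unfolding f_def by (intro continuous_intros continuous_on_subset[OF mv_cont]) auto
  have ne: "sphere (0::real^'n) 1 \<noteq> {}"
    using norm_axis_1[of undefined] by (metis dist_0_norm mem_sphere empty_iff)
  obtain u0 where u0: "u0 \<in> sphere 0 1" "\<And>y. y \<in> sphere 0 1 \<Longrightarrow> f u0 \<le> f y"
    using continuous_attains_inf[OF compact_sphere ne cont] by blast
  have "u0 \<noteq> 0" using u0(1) by auto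
  then have c: "f u0 > 0" unfolding f_def by (rule pos_def_pos[OF assms])
  have "f u0 * norm v ^ 2 \<le> f v" for v
  proof (cases "v = 0")
    case True then show ?thesis by (simp add: f_def)
  next
    case False
    define u where "u = v /\<^sub>R norm v"
    have u: "u \<in> sphere 0 1" using False by (simp add: u_def)
    have vu: "v = norm v *\<^sub>R u" using False by (simp add: u_def)
    have "f (norm v *\<^sub>R u) = norm v ^ 2 * f u"
      by (simp add: f_def matrix_vector_mult_scaleR power2_eq_square)
    then have "f v = norm v ^ 2 * f u" using vu by metis
    then show ?thesis using u0(2)[OF u] by (metis mult_right_mono zero_le_power2 mult.commute)
  qed
  then show ?thesis using c unfolding f_def by blast
qed

lemma smat_mv: "((k::real) *\<^sub>R mat 1) *v v = k *\<^sub>R (v::real^'n)"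
  by (metis scaleR_matrix_vector_assoc matrix_vector_mul_lid)

lemma transpose_diff: "transpose (A - B) = transpose A - transpose (B::real^'n^'m)"
  by (simp add: transpose_def vec_eq_iff)

lemma transpose_add: "transpose (A + B) = transpose A + transpose (B::real^'n^'m)"
  by (simp add: transpose_def vec_eq_iff)

lemma pd_shift:
  fixes P :: "real^'n^'n"
  assumes "pos_def P"
  shows "\<exists>c>0. pos_def (P - c *\<^sub>R mat 1) \<and> (\<forall>v. v \<bullet> (P *v v) = v \<bullet> ((P - c *\<^sub>R mat 1) *v v) + c * norm v ^ 2)"
proof -
  obtain c where c: "c > 0" "\<And>v. c * norm v ^ 2 \<le> v \<bullet> (P *v v)" using pd_lower[OF assms] by blast
  have eq: "v \<bullet> ((P - (c/2) *\<^sub>R mat 1) *v v) = v \<bullet> (P *v v) - (c/2) * norm v ^ 2" for v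
    by (simp add: matrix_vector_mult_diff_rdistrib inner_diff_right power2_norm_eq_inner smat_mv)
  have "pos_def (P - (c/2) *\<^sub>R mat 1)"
    unfolding pos_def_def
  proof safe
    show "transpose (P - (c/2) *\<^sub>R mat 1) = P - (c/2) *\<^sub>R mat 1"
      using pos_def_sym[OF assms] by (simp add: transpose_diff transpose_scalar)
  next
    fix v :: "real^'n" assume "v \<noteq> 0"
    then have pos: "norm v ^ 2 > 0" by simp
    have "(c/2) * norm v ^ 2 < c * norm v ^ 2" using c(1) pos by (intro mult_strict_right_mono) auto
    then show "v \<bullet> ((P - (c/2) *\<^sub>R mat 1) *v v) > 0" using c(2)[of v] unfolding eq
      by linarith
  qed
  moreover have "\<forall>v. v \<bullet> (P *v v) = v \<bullet> ((P - (c/2) *\<^sub>R mat 1) *v v) + (c/2) * norm v ^ 2"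
    using eq by simp
  ultimately show ?thesis using c(1) by (intro exI[of _ "c/2"]) simp
qed


lemma mv_neg: "(A::real^'n^'m) *v (- x) = - (A *v x)"
  using matrix_vector_mult_diff_distrib[of A 0 x] by simp

lemma gauss_dom:
  fixes S :: "real^'n^'n"
  assumes "pos_def S"
  shows "\<exists>P' c. pos_def P' \<and> c > 0 \<and> (\<forall>v. gauss_pdf m S v =
     exp (- (c * norm (v - m) ^ 2) / 2) * exp (- ((v - m) \<bullet> (P' *v (v - m))) / 2) / sqrt ((2*pi)^CARD('n) * det S))"
proof -
  obtain c where c: "c > 0" "pos_def (matrix_inv S - c *\<^sub>R mat 1)"
    "\<And>v. v \<bullet> (matrix_inv S *v v) = v \<bullet> ((matrix_inv S - c *\<^sub>R mat 1) *v v) + c * norm v ^ 2"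
    using pd_shift[OF pos_def_inv[OF assms]] by blast
  have "gauss_pdf m S v = exp (- (c * norm (v - m) ^ 2) / 2) * exp (- ((v - m) \<bullet> ((matrix_inv S - c *\<^sub>R mat 1) *v (v - m))) / 2) / sqrt ((2*pi)^CARD('n) * det S)" for v
    unfolding gauss_pdf_def c(3)[of "v - m"] by (simp add: exp_add[symmetric] field_simps)
  then show ?thesis using c(1,2) by blast
qed

lemma int_exp_quad:
  fixes P :: "real^'n^'n"
  assumes "pos_def P"
  shows "integrable lborel (\<lambda>v. exp (- ((v - m) \<bullet> (P *v (v - m))) / 2))"
proof (rule integrableI_nn_integral_finite)
  have "(\<integral>\<^sup>+v. ennreal (exp (- ((v - m) \<bullet> (P *v (v - m)))/2)) \<partial>lborel)
      = (\<integral>\<^sup>+v. ennreal (exp (- (v \<bullet> (P *v v))/2)) \<partial>lborel)"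
    by (rule nn_integral_shift[where f="\<lambda>v. ennreal (exp (- (v \<bullet> (P *v v))/2))"]) measurable
  also have "\<dots> = ennreal (sqrt ((2*pi)^CARD('n) / det P))"
    using gauss_vec[OF assms] by simp
  finally show "(\<integral>\<^sup>+v. ennreal (exp (- ((v - m) \<bullet> (P *v (v - m)))/2)) \<partial>lborel) = ennreal (sqrt ((2*pi)^CARD('n) / det P))" .
qed auto

lemma texp_bound:
  fixes c t :: real
  assumes "c > 0" "t \<ge> 0"
  shows "t * exp (- (c * t) / 2) \<le> 2 / c"
proof -
  have "c * t / 2 \<le> exp (c * t / 2)" using exp_ge_add_one_self[of "c * t / 2"] by linarith
  then have "t \<le> 2 / c * exp (c * t / 2)" using assms by (simp add: field_simps)
  then have "t * exp (- (c * t) / 2) \<le> 2 / c * exp (c * t / 2) * exp (- (c * t) / 2)"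
    by (rule mult_right_mono) simp
  also have "\<dots> = 2 / c" by (simp add: mult.assoc exp_add[symmetric])
  finally show ?thesis .
qed

lemma gauss_integrable:
  fixes S :: "real^'n^'n"
  assumes S: "pos_def S" and f[measurable]: "f \<in> borel_measurable borel"
    and fb: "\<And>v. \<bar>f v\<bar> \<le> C * (1 + norm v ^ 2)"
  shows "integrable lborel (\<lambda>v. gauss_pdf m S v * f v)"
proof -
  obtain P' c where P': "pos_def P'" "c > 0" and g: "\<And>v. gauss_pdf m S v =
     exp (- (c * norm (v - m) ^ 2) / 2) * exp (- ((v - m) \<bullet> (P' *v (v - m))) / 2) / sqrt ((2*pi)^CARD('n) * det S)"
    using gauss_dom[OF S, of m] by blast
  define Z where "Z = sqrt ((2*pi)^CARD('n) * det S)"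
  have Z: "Z > 0" using pos_def_det[OF S] by (simp add: Z_def)
  have C: "C \<ge> 0" using fb[of 0] by simp
  define K where "K = C * (1 + 2 * norm m ^ 2 + 4 / c) / Z"
  show ?thesis
  proof (rule Bochner_Integration.integrable_bound[where f="\<lambda>v. K * exp (- ((v - m) \<bullet> (P' *v (v - m))) / 2)"])
    show "integrable lborel (\<lambda>v. K * exp (- ((v - m) \<bullet> (P' *v (v - m))) / 2))"
      using int_exp_quad[OF P'(1), of m] by simp
    show "(\<lambda>v. gauss_pdf m S v * f v) \<in> borel_measurable lborel" by measurable
    show "AE v in lborel. norm (gauss_pdf m S v * f v) \<le> norm (K * exp (- ((v - m) \<bullet> (P' *v (v - m))) / 2))"
    proof (rule AE_I2)
      fix v :: "real^'n"
      define t where "t = norm (v - m) ^ 2"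
      define e1 where "e1 = exp (- (c * t) / 2)"
      define E where "E = exp (- ((v - m) \<bullet> (P' *v (v - m))) / 2)"
      have t: "t \<ge> 0" by (simp add: t_def)
      have e1: "e1 > 0" "e1 \<le> 1" using P'(2) t by (auto simp: e1_def)
      have E: "E > 0" by (simp add: E_def)
      have h1: "norm v ^ 2 \<le> 2 * norm m ^ 2 + 2 * t"
      proof -
        have "norm v \<le> norm (v - m) + norm m" using norm_triangle_ineq[of "v - m" m] by simp
        then have "norm v ^ 2 \<le> (norm (v - m) + norm m) ^ 2" by (simp add: power_mono)
        also have "\<dots> \<le> 2 * norm m ^ 2 + 2 * norm (v - m) ^ 2"
          using sum_squares_bound[of "norm (v - m)" "norm m"] by (simp add: power2_eq_square algebra_simps)
        finally show ?thesis by (simp add: t_def)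
      qed
      have h2: "e1 * t \<le> 2 / c" using texp_bound[OF P'(2) t] by (simp add: e1_def mult.commute)
      have "\<bar>f v\<bar> * e1 \<le> C * (1 + norm v ^ 2) * e1"
        using fb[of v] e1 by (simp add: mult_right_mono)
      also have "\<dots> = (C * e1) * (1 + norm v ^ 2)" by (simp add: mult_ac)
      also have "\<dots> \<le> (C * e1) * (1 + 2 * norm m ^ 2 + 2 * t)" using h1 C e1 by (intro mult_left_mono) auto
      also have "\<dots> = C * ((1 + 2 * norm m ^ 2) * e1 + 2 * (e1 * t))" by (simp add: algebra_simps)
      also have "\<dots> \<le> C * ((1 + 2 * norm m ^ 2) + 4 / c)"
      proof (rule mult_left_mono[OF _ C])
        have "(1 + 2 * norm m ^ 2) * e1 \<le> (1 + 2 * norm m ^ 2)"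
          using e1 by (simp add: mult_left_le)
        then show "(1 + 2 * norm m ^ 2) * e1 + 2 * (e1 * t) \<le> (1 + 2 * norm m ^ 2) + 4 / c"
          using h2 by linarith
      qed
      finally have h3: "\<bar>f v\<bar> * e1 \<le> C * ((1 + 2 * norm m ^ 2) + 4 / c)" .
      have "norm (gauss_pdf m S v * f v) = E / Z * (\<bar>f v\<bar> * e1)"
        unfolding g Z_def[symmetric] E_def[symmetric] t_def[symmetric] e1_def[symmetric]
        using e1 E Z by (simp add: abs_mult field_simps)
      also have "\<dots> \<le> E / Z * (C * ((1 + 2 * norm m ^ 2) + 4 / c))"
        using h3 E Z by (intro mult_left_mono) auto
      also have "\<dots> = norm (K * E)"
        using E Z C P'(2) by (simp add: K_def abs_mult field_simps)
      finally show "norm (gauss_pdf m S v * f v) \<le> norm (K * exp (- ((v - m) \<bullet> (P' *v (v - m))) / 2))"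
        by (simp add: E_def)
    qed
  qed
qed

lemma lborel_reflect: "distr lborel borel (\<lambda>v. t - v) = (lborel :: (real^'n) measure)"
  using lborel_affine[of "-1" t] by (simp add: density_1)

lemma gauss_sym: "gauss_pdf m S (2 *\<^sub>R m - v) = gauss_pdf m S v"
proof -
  have e: "2 *\<^sub>R m - v - m = - (v - m)" by (simp add: algebra_simps scaleR_2)
  show ?thesis by (simp only: gauss_pdf_def e mv_neg inner_minus_left inner_minus_right minus_minus)
qed

lemma lin_bound: "\<bar>l \<bullet> v\<bar> \<le> norm l * (1 + norm (v::real^'n) ^ 2)"
proof -
  have a: "2 * norm v \<le> norm v * norm v + 1" using sum_squares_bound[of "norm v" 1] by (simp add: power2_eq_square)
  have "norm v \<le> 1 + norm v ^ 2" unfolding power2_eq_square using a norm_ge_zero[of v] by linarith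
  then have "norm l * norm v \<le> norm l * (1 + norm v ^ 2)" by (simp add: mult_left_mono)
  then show ?thesis using Cauchy_Schwarz_ineq2[of l v] by linarith
qed

lemma gauss_mean:
  fixes S :: "real^'n^'n"
  assumes S: "pos_def S"
  shows "(\<integral>v. gauss_pdf m S v * (l \<bullet> v) \<partial>lborel) = l \<bullet> m"
proof -
  define h where "h v = gauss_pdf m S v * (l \<bullet> v)" for v
  have hi: "integrable lborel h" unfolding h_def
    by (rule gauss_integrable[OF S _ lin_bound]) measurable
  have gi: "integrable lborel (gauss_pdf m S)" by (rule gauss_integrable1[OF S])
  have "(\<integral>v. h v \<partial>lborel) = (\<integral>v. h v \<partial>distr lborel borel (\<lambda>v. 2 *\<^sub>R m - v))"
    by (simp add: lborel_reflect)
  also have "\<dots> = (\<integral>v. h (2 *\<^sub>R m - v) \<partial>lborel)"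
    by (rule integral_distr) (simp_all add: h_def)
  also have "\<dots> = (\<integral>v. 2 * (l \<bullet> m) * gauss_pdf m S v - h v \<partial>lborel)"
    by (rule Bochner_Integration.integral_cong) (simp_all add: h_def gauss_sym inner_diff_right algebra_simps)
  also have "\<dots> = 2 * (l \<bullet> m) - (\<integral>v. h v \<partial>lborel)"
    using gi hi by (simp add: gauss_integral1[OF S])
  finally show ?thesis unfolding h_def by simp
qed

lemma gauss_E:
  fixes S :: "real^'n^'n"
  assumes S: "pos_def S" and q[measurable]: "q \<in> borel_measurable borel"
    and qb: "\<And>v. \<bar>q v\<bar> \<le> C * (1 + norm v ^ 2)"
  shows "integrable lborel (\<lambda>v. gauss_pdf m S v * (a + l \<bullet> v + q v))"
    "(\<integral>v. gauss_pdf m S v * (a + l \<bullet> v + q v) \<partial>lborel) = a + l \<bullet> m + (\<integral>v. gauss_pdf m S v * q v \<partial>lborel)"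
proof -
  have i1: "integrable lborel (\<lambda>v. a * gauss_pdf m S v)" using gauss_integrable1[OF S] by simp
  have i2: "integrable lborel (\<lambda>v. gauss_pdf m S v * (l \<bullet> v))"
    by (rule gauss_integrable[OF S _ lin_bound]) measurable
  have i3: "integrable lborel (\<lambda>v. gauss_pdf m S v * q v)"
    by (rule gauss_integrable[OF S q qb])
  have eq: "(\<lambda>v. gauss_pdf m S v * (a + l \<bullet> v + q v)) = (\<lambda>v. a * gauss_pdf m S v + gauss_pdf m S v * (l \<bullet> v) + gauss_pdf m S v * q v)"
    by (simp add: algebra_simps)
  show "integrable lborel (\<lambda>v. gauss_pdf m S v * (a + l \<bullet> v + q v))"
    unfolding eq using i1 i2 i3 by simp
  show "(\<integral>v. gauss_pdf m S v * (a + l \<bullet> v + q v) \<partial>lborel) = a + l \<bullet> m + (\<integral>v. gauss_pdf m S v * q v \<partial>lborel)"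
    unfolding eq using i1 i2 i3 by (simp add: gauss_integral1[OF S] gauss_mean[OF S])
qed


lemma quad_bound:
  fixes Q :: "real^'n^'n"
  shows "\<exists>K. \<forall>v. \<bar>(v - a) \<bullet> (Q *v (v - a))\<bar> \<le> K * (1 + norm v ^ 2)"
proof -
  obtain B where B: "B > 0" "\<And>x. norm (Q *v x) \<le> norm x * B"
    using bounded_linear.pos_bounded[OF matrix_vector_mul_bounded_linear[of Q]] by blast
  have "\<bar>(v - a) \<bullet> (Q *v (v - a))\<bar> \<le> (B * (2 + 2 * norm a ^ 2)) * (1 + norm v ^ 2)" for v
  proof -
    have "\<bar>(v - a) \<bullet> (Q *v (v - a))\<bar> \<le> norm (v - a) * norm (Q *v (v - a))"
      by (rule Cauchy_Schwarz_ineq2)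
    also have "\<dots> \<le> norm (v - a) * (norm (v - a) * B)"
      using B(2) by (simp add: mult_left_mono)
    also have "\<dots> = B * norm (v - a) ^ 2" by (simp add: power2_eq_square)
    also have "norm (v - a) ^ 2 \<le> 2 * norm v ^ 2 + 2 * norm a ^ 2"
    proof -
      have "norm (v - a) \<le> norm v + norm a" by (rule norm_triangle_ineq4)
      then have "norm (v - a) ^ 2 \<le> (norm v + norm a) ^ 2" by (simp add: power_mono)
      also have "\<dots> \<le> 2 * norm v ^ 2 + 2 * norm a ^ 2"
        using sum_squares_bound[of "norm v" "norm a"] by (simp add: power2_eq_square algebra_simps)
      finally show ?thesis .
    qed
    then have "B * norm (v - a) ^ 2 \<le> B * (2 * norm v ^ 2 + 2 * norm a ^ 2)"
      using B(1) by (simp add: mult_left_mono)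
    also have "\<dots> \<le> (B * (2 + 2 * norm a ^ 2)) * (1 + norm v ^ 2)"
    proof -
      have "2 * norm v ^ 2 + 2 * norm a ^ 2 \<le> (2 + 2 * norm a ^ 2) * (1 + norm v ^ 2)"
        by (simp add: algebra_simps)
      then show ?thesis using B(1) by (simp add: mult_left_mono mult.assoc)
    qed
    finally show ?thesis by simp
  qed
  then show ?thesis by blast
qed

definition klc :: "real^'n \<Rightarrow> real^'n^'n \<Rightarrow> real^'n^'n \<Rightarrow> real" where
  "klc m1 S1 S2 = (\<integral>v. gauss_pdf m1 S1 v * (ln (gauss_pdf m1 S1 v) + (v \<bullet> (matrix_inv S2 *v v)) / 2
       + ln (sqrt ((2*pi)^CARD('n) * det S2))) \<partial>lborel)"

lemma ln_gauss:
  assumes "pos_def S"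
  shows "ln (gauss_pdf m S v) = - ((v - m) \<bullet> (matrix_inv S *v (v - m))) / 2 - ln (sqrt ((2*pi)^CARD('n) * det (S::real^'n^'n)))"
  using pos_def_det[OF assms] by (simp add: gauss_pdf_def ln_div)

lemma KL_gauss:
  fixes S1 S2 :: "real^'n^'n"
  assumes S1: "pos_def S1" and S2: "pos_def S2"
  shows "KL (gauss_pdf m1 S1) (gauss_pdf m2 S2) = klc m1 S1 S2 + (m2 \<bullet> (matrix_inv S2 *v m2)) / 2 - m2 \<bullet> (matrix_inv S2 *v m1)"
proof -
  define W where "W = matrix_inv S2"
  have Ws: "transpose W = W" unfolding W_def by (rule pos_def_sym[OF pos_def_inv[OF S2]])
  define Z2 where "Z2 = sqrt ((2*pi)^CARD('n) * det S2)"
  define Z1 where "Z1 = sqrt ((2*pi)^CARD('n) * det S1)"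
  define F where "F v = ln (gauss_pdf m1 S1 v) + (v \<bullet> (W *v v)) / 2 + ln Z2" for v
  have F_meas: "F \<in> borel_measurable borel" unfolding F_def by measurable
  obtain K1 where K1: "\<And>v. \<bar>(v - m1) \<bullet> (matrix_inv S1 *v (v - m1))\<bar> \<le> K1 * (1 + norm v ^ 2)"
    using quad_bound by blast
  obtain K2 where K2: "\<And>v. \<bar>(v - 0) \<bullet> (W *v (v - 0))\<bar> \<le> K2 * (1 + norm v ^ 2)"
    using quad_bound by blast
  have Fb: "\<bar>F v\<bar> \<le> (K1 / 2 + K2 / 2 + \<bar>ln Z1\<bar> + \<bar>ln Z2\<bar>) * (1 + norm v ^ 2)" for v
  proof -
    define q1 where "q1 = (v - m1) \<bullet> (matrix_inv S1 *v (v - m1))"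
    define q2 where "q2 = v \<bullet> (W *v v)"
    define N where "N = 1 + norm v ^ 2"
    have F: "F v = - q1 / 2 - ln Z1 + q2 / 2 + ln Z2"
      unfolding F_def ln_gauss[OF S1] Z1_def q1_def q2_def by simp
    have o: "1 \<le> N" by (simp add: N_def)
    have z: "\<bar>ln Z1\<bar> \<le> \<bar>ln Z1\<bar> * N" "\<bar>ln Z2\<bar> \<le> \<bar>ln Z2\<bar> * N"
      using o by (simp_all add: mult_le_cancel_left1)
    have k: "\<bar>q1\<bar> \<le> K1 * N" "\<bar>q2\<bar> \<le> K2 * N" using K1[of v] K2[of v] by (simp_all add: q1_def q2_def N_def)
    have r: "(K1 / 2 + K2 / 2 + \<bar>ln Z1\<bar> + \<bar>ln Z2\<bar>) * N = (K1 * N) / 2 + (K2 * N) / 2 + \<bar>ln Z1\<bar> * N + \<bar>ln Z2\<bar> * N"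
      by (simp add: algebra_simps)
    have "\<bar>F v\<bar> \<le> (K1 * N) / 2 + (K2 * N) / 2 + \<bar>ln Z1\<bar> * N + \<bar>ln Z2\<bar> * N"
      unfolding F using z k abs_ge_self[of "ln Z1"] abs_ge_minus_self[of "ln Z1"]
        abs_ge_self[of "ln Z2"] abs_ge_minus_self[of "ln Z2"] unfolding abs_le_iff by linarith
    then have "\<bar>F v\<bar> \<le> (K1 / 2 + K2 / 2 + \<bar>ln Z1\<bar> + \<bar>ln Z2\<bar>) * N" unfolding r .
    then show ?thesis by (simp only: N_def)
  qed
  have pt: "gauss_pdf m1 S1 v * ln (gauss_pdf m1 S1 v / gauss_pdf m2 S2 v)
      = gauss_pdf m1 S1 v * ((m2 \<bullet> (W *v m2)) / 2 + (- (W *v m2)) \<bullet> v + F v)" for v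
  proof -
    have "ln (gauss_pdf m1 S1 v / gauss_pdf m2 S2 v) = ln (gauss_pdf m1 S1 v) - ln (gauss_pdf m2 S2 v)"
      by (intro ln_divide_pos gauss_pos S1 S2)
    also have "ln (gauss_pdf m2 S2 v) = - ((v - m2) \<bullet> (W *v (v - m2))) / 2 - ln Z2"
      unfolding ln_gauss[OF S2] W_def Z2_def ..
    also have "(v - m2) \<bullet> (W *v (v - m2)) = v \<bullet> (W *v v) - 2 * ((W *v m2) \<bullet> v) + m2 \<bullet> (W *v m2)"
    proof -
      have "m2 \<bullet> (W *v v) = (W *v m2) \<bullet> v" using sym_inner[OF Ws, of m2 v] by simp
      then show ?thesis
        by (simp add: matrix_vector_mult_diff_distrib inner_diff_left inner_diff_right inner_commute[of v "W *v m2"])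
    qed
    finally have L: "ln (gauss_pdf m1 S1 v / gauss_pdf m2 S2 v) = ln (gauss_pdf m1 S1 v) - (- (v \<bullet> (W *v v) - 2 * ((W *v m2) \<bullet> v) + m2 \<bullet> (W *v m2)) / 2 - ln Z2)" .
    have "ln (gauss_pdf m1 S1 v / gauss_pdf m2 S2 v) = (m2 \<bullet> (W *v m2)) / 2 + (- (W *v m2)) \<bullet> v + F v"
      unfolding L F_def inner_minus_left by (simp add: field_simps)
    then show ?thesis by simp
  qed
  have "KL (gauss_pdf m1 S1) (gauss_pdf m2 S2)
      = (\<integral>v. gauss_pdf m1 S1 v * ((m2 \<bullet> (W *v m2)) / 2 + (- (W *v m2)) \<bullet> v + F v) \<partial>lborel)"
    unfolding KL_def pt ..
  also have "\<dots> = (m2 \<bullet> (W *v m2)) / 2 + (- (W *v m2)) \<bullet> m1 + (\<integral>v. gauss_pdf m1 S1 v * F v \<partial>lborel)"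
    by (rule gauss_E(2)[OF S1 F_meas Fb])
  also have "(\<integral>v. gauss_pdf m1 S1 v * F v \<partial>lborel) = klc m1 S1 S2"
    unfolding klc_def F_def W_def Z2_def ..
  also have "(- (W *v m2)) \<bullet> m1 = - (m2 \<bullet> (W *v m1))"
    using sym_inner[OF Ws, of m2 m1] by simp
  finally show ?thesis unfolding W_def by simp
qed


lemma ip_tr3: "t \<bullet> ((transpose A ** B ** C) *v s) = ((A::real^'a^'b) *v t) \<bullet> ((B::real^'c^'b) *v ((C::real^'d^'c) *v s))"
proof -
  have "(transpose A ** B ** C) *v s = transpose A *v (B *v (C *v s))"
    by (simp only: matrix_vector_mul_assoc matrix_mul_assoc)
  then show ?thesis using inner_transpose[of A t "B *v (C *v s)"] by simp
qed

lemma smv: "((k::real) *\<^sub>R A) *v v = k *\<^sub>R ((A::real^'n^'m) *v v)"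
  by (rule scaleR_matrix_vector_assoc[symmetric])

lemma YP_lemma:
  fixes Szn :: "real^'b^'b" and SYgX SY :: "real^'y^'y" and P2 :: "real^'b^'y"
  assumes Szn: "pos_def Szn" and SYgX: "pos_def SYgX" and SY: "pos_def SY"
  defines "WY \<equiv> matrix_inv SY"
  shows "(\<integral>t2. gauss_pdf mb Szn t2 * KL (gauss_pdf my SYgX) (gauss_pdf (u + P2 *v t2) SY) \<partial>lborel)
     = klc my SYgX SY + (u \<bullet> (WY *v u)) / 2 - u \<bullet> (WY *v my) + u \<bullet> (WY *v (P2 *v mb)) - (P2 *v mb) \<bullet> (WY *v my)
       + (\<integral>t2. gauss_pdf mb Szn t2 * ((t2 \<bullet> ((transpose P2 ** WY ** P2) *v t2)) / 2) \<partial>lborel)"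
proof -
  have WYs: "transpose WY = WY" unfolding WY_def by (rule pos_def_sym[OF pos_def_inv[OF SY]])
  define Q where "Q = transpose P2 ** WY ** P2"
  define aa where "aa = klc my SYgX SY + (u \<bullet> (WY *v u)) / 2 - u \<bullet> (WY *v my)"
  define ll where "ll = transpose P2 *v (WY *v u) - transpose P2 *v (WY *v my)"
  define q where "q t2 = (t2 \<bullet> (Q *v t2)) / 2" for t2
  have pt: "KL (gauss_pdf my SYgX) (gauss_pdf (u + P2 *v t2) SY) = aa + ll \<bullet> t2 + q t2" for t2
  proof -
    have k: "KL (gauss_pdf my SYgX) (gauss_pdf (u + P2 *v t2) SY)
       = klc my SYgX SY + ((u + P2 *v t2) \<bullet> (WY *v (u + P2 *v t2))) / 2 - (u + P2 *v t2) \<bullet> (WY *v my)"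
      unfolding WY_def by (rule KL_gauss[OF SYgX SY])
    have e1: "(P2 *v t2) \<bullet> (WY *v u) = u \<bullet> (WY *v (P2 *v t2))"
      using sym_inner[OF WYs, of u "P2 *v t2"] by (simp add: inner_commute)
    have e2: "ll \<bullet> t2 = u \<bullet> (WY *v (P2 *v t2)) - (P2 *v t2) \<bullet> (WY *v my)"
    proof -
      have "(transpose P2 *v (WY *v u)) \<bullet> t2 = (WY *v u) \<bullet> (P2 *v t2)"
        using inner_transpose[of "transpose P2" "WY *v u" t2] by simp
      moreover have "(transpose P2 *v (WY *v my)) \<bullet> t2 = (WY *v my) \<bullet> (P2 *v t2)"
        using inner_transpose[of "transpose P2" "WY *v my" t2] by simp
      moreover have "(WY *v u) \<bullet> (P2 *v t2) = u \<bullet> (WY *v (P2 *v t2))" by (rule sym_inner[OF WYs])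
      ultimately show ?thesis unfolding ll_def inner_diff_left by (simp add: inner_commute)
    qed
    have e3: "q t2 = ((P2 *v t2) \<bullet> (WY *v (P2 *v t2))) / 2"
      unfolding q_def Q_def ip_tr3 ..
    show ?thesis unfolding k e2 e3 aa_def
      by (simp add: matrix_vector_right_distrib inner_add_left inner_add_right e1 field_simps)
  qed
  have qm: "q \<in> borel_measurable borel" unfolding q_def by measurable
  obtain K where K: "\<And>v. \<bar>(v - 0) \<bullet> (Q *v (v - 0))\<bar> \<le> K * (1 + norm v ^ 2)"
    using quad_bound by blast
  have qb: "\<bar>q v\<bar> \<le> (K / 2) * (1 + norm v ^ 2)" for v
    using K[of v] by (simp add: q_def)
  have "(\<integral>t2. gauss_pdf mb Szn t2 * KL (gauss_pdf my SYgX) (gauss_pdf (u + P2 *v t2) SY) \<partial>lborel)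
      = (\<integral>t2. gauss_pdf mb Szn t2 * (aa + ll \<bullet> t2 + q t2) \<partial>lborel)"
    unfolding pt ..
  also have "\<dots> = aa + ll \<bullet> mb + (\<integral>t2. gauss_pdf mb Szn t2 * q t2 \<partial>lborel)"
    by (rule gauss_E(2)[OF Szn qm qb])
  also have "ll \<bullet> mb = u \<bullet> (WY *v (P2 *v mb)) - (P2 *v mb) \<bullet> (WY *v my)"
  proof -
    have "(transpose P2 *v (WY *v u)) \<bullet> mb = (WY *v u) \<bullet> (P2 *v mb)"
      using inner_transpose[of "transpose P2" "WY *v u" mb] by simp
    moreover have "(transpose P2 *v (WY *v my)) \<bullet> mb = (WY *v my) \<bullet> (P2 *v mb)"
      using inner_transpose[of "transpose P2" "WY *v my" mb] by simp
    moreover have "(WY *v u) \<bullet> (P2 *v mb) = u \<bullet> (WY *v (P2 *v mb))" by (rule sym_inner[OF WYs])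
    ultimately show ?thesis unfolding ll_def inner_diff_left by (simp add: inner_commute)
  qed
  finally show ?thesis unfolding aa_def q_def Q_def by simp
qed


lemma sc_generic:
  fixes ST :: "real^'a^'a" and S21 :: "real^'b^'b" and Xi1 :: "real^'a^'b" and Bn :: "real^'x^'b"
    and Szn :: "real^'b^'b" and Th :: "real^'x^'y" and SYgX SY :: "real^'y^'y"
    and P1 :: "real^'a^'y" and P2 :: "real^'b^'y" and bet gam :: real
  assumes ST: "pos_def ST" and S21: "pos_def S21" and Szn: "pos_def Szn" and SYgX: "pos_def SYgX"
    and SY: "pos_def SY" and bet: "bet > 0"
    and M: "pos_def (matrix_inv ST - (gam / bet) *\<^sub>R (transpose Xi1 ** matrix_inv S21 ** Xi1)
                + (1 / bet) *\<^sub>R (transpose P1 ** matrix_inv SY ** P1))"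
  shows "\<exists>c::real^'x \<Rightarrow> real. \<forall>x. c x > 0 \<and> (\<forall>t.
     gauss_pdf 0 ST t * exp (gam / bet * KL (gauss_pdf (Bn *v x) Szn) (gauss_pdf (Xi1 *v t) S21)
        - 1 / bet * (\<integral>t2. gauss_pdf (Bn *v x) Szn t2 * KL (gauss_pdf (Th *v x) SYgX) (gauss_pdf (P1 *v t + P2 *v t2) SY) \<partial>lborel))
     = c x * gauss_pdf ((matrix_inv (matrix_inv ST - (gam / bet) *\<^sub>R (transpose Xi1 ** matrix_inv S21 ** Xi1)
                + (1 / bet) *\<^sub>R (transpose P1 ** matrix_inv SY ** P1))
           ** (- (gam / bet) *\<^sub>R (transpose Xi1 ** matrix_inv S21 ** Bn)
               + (1 / bet) *\<^sub>R (transpose P1 ** matrix_inv SY ** (Th - P2 ** Bn)))) *v x)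
         (matrix_inv (matrix_inv ST - (gam / bet) *\<^sub>R (transpose Xi1 ** matrix_inv S21 ** Xi1)
                + (1 / bet) *\<^sub>R (transpose P1 ** matrix_inv SY ** P1))) t)"
proof -
  define W1 where "W1 = matrix_inv ST"
  define W21 where "W21 = matrix_inv S21"
  define WY where "WY = matrix_inv SY"
  define gb where "gb = gam / bet"
  define Mm where "Mm = matrix_inv ST - (gam / bet) *\<^sub>R (transpose Xi1 ** matrix_inv S21 ** Xi1)
                + (1 / bet) *\<^sub>R (transpose P1 ** matrix_inv SY ** P1)"
  define Nm where "Nm = - (gam / bet) *\<^sub>R (transpose Xi1 ** matrix_inv S21 ** Bn)
               + (1 / bet) *\<^sub>R (transpose P1 ** matrix_inv SY ** (Th - P2 ** Bn))"
  have Mpd: "pos_def Mm" unfolding Mm_def by (rule M)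
  have Mi: "invertible Mm" by (rule pos_def_invertible[OF Mpd])
  have Ms: "transpose Mm = Mm" by (rule pos_def_sym[OF Mpd])
  have Gpd: "pos_def (matrix_inv Mm)" by (rule pos_def_inv[OF Mpd])
  define Z1 where "Z1 = sqrt ((2*pi)^CARD('a) * det ST)"
  define ZM where "ZM = sqrt ((2*pi)^CARD('a) * det (matrix_inv Mm))"
  have Z1: "Z1 > 0" using pos_def_det[OF ST] by (simp add: Z1_def)
  have ZM: "ZM > 0" using pos_def_det[OF Gpd] by (simp add: ZM_def)
  define Eq where "Eq x = (\<integral>t2. gauss_pdf (Bn *v x) Szn t2 * ((t2 \<bullet> ((transpose P2 ** WY ** P2) *v t2)) / 2) \<partial>lborel)" for x
  define h where "h x = gb * klc (Bn *v x) Szn S21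
      - 1 / bet * (klc (Th *v x) SYgX SY - (P2 *v (Bn *v x)) \<bullet> (WY *v (Th *v x)) + Eq x)" for x
  define a where "a x = (matrix_inv Mm ** Nm) *v x" for x
  define c where "c x = exp (h x) / Z1 * (ZM / exp (- (a x \<bullet> (Mm *v a x)) / 2))" for x
  have Mq: "t \<bullet> (Mm *v t) = t \<bullet> (W1 *v t) - gb * ((Xi1 *v t) \<bullet> (W21 *v (Xi1 *v t)))
       + 1 / bet * ((P1 *v t) \<bullet> (WY *v (P1 *v t)))" for t
    unfolding Mm_def W1_def W21_def WY_def gb_def
    by (simp only: matrix_vector_mult_add_rdistrib matrix_vector_mult_diff_rdistrib inner_add_right
        inner_diff_right smv inner_scaleR_right ip_tr3)
  have Nq: "t \<bullet> (Nm *v x) = - gb * ((Xi1 *v t) \<bullet> (W21 *v (Bn *v x)))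
       + 1 / bet * ((P1 *v t) \<bullet> (WY *v (Th *v x)) - (P1 *v t) \<bullet> (WY *v (P2 *v (Bn *v x))))" for t x
  proof -
    have "(Th - P2 ** Bn) *v x = Th *v x - P2 *v (Bn *v x)"
      by (simp only: matrix_vector_mult_diff_rdistrib matrix_vector_mul_assoc)
    then show ?thesis
      unfolding Nm_def W21_def WY_def gb_def
      by (simp only: matrix_vector_mult_add_rdistrib inner_add_right smv inner_scaleR_right ip_tr3
          matrix_vector_mult_diff_distrib inner_diff_right)
  qed
  have Ma: "Mm *v a x = Nm *v x" for x
    using inv_mat(1)[OF Mi] by (simp add: a_def matrix_vector_mul_assoc matrix_mul_assoc)
  have "c x > 0 \<and> (\<forall>t.
     gauss_pdf 0 ST t * exp (gam / bet * KL (gauss_pdf (Bn *v x) Szn) (gauss_pdf (Xi1 *v t) S21)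
        - 1 / bet * (\<integral>t2. gauss_pdf (Bn *v x) Szn t2 * KL (gauss_pdf (Th *v x) SYgX) (gauss_pdf (P1 *v t + P2 *v t2) SY) \<partial>lborel))
     = c x * gauss_pdf (a x) (matrix_inv Mm) t)" for x
  proof (intro conjI allI)
    show "c x > 0" using Z1 ZM by (simp add: c_def)
  next
    fix t
    define E where "E = - (t \<bullet> (Mm *v t)) / 2 + t \<bullet> (Nm *v x)"
    have g0: "gauss_pdf 0 ST t = exp (- (t \<bullet> (W1 *v t)) / 2) / Z1"
      by (simp add: gauss_pdf_def W1_def Z1_def)
    have KL1: "KL (gauss_pdf (Bn *v x) Szn) (gauss_pdf (Xi1 *v t) S21)
        = klc (Bn *v x) Szn S21 + ((Xi1 *v t) \<bullet> (W21 *v (Xi1 *v t))) / 2 - (Xi1 *v t) \<bullet> (W21 *v (Bn *v x))"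
      unfolding W21_def by (rule KL_gauss[OF Szn S21])
    have YP: "(\<integral>t2. gauss_pdf (Bn *v x) Szn t2 * KL (gauss_pdf (Th *v x) SYgX) (gauss_pdf (P1 *v t + P2 *v t2) SY) \<partial>lborel)
        = klc (Th *v x) SYgX SY + ((P1 *v t) \<bullet> (WY *v (P1 *v t))) / 2 - (P1 *v t) \<bullet> (WY *v (Th *v x))
          + (P1 *v t) \<bullet> (WY *v (P2 *v (Bn *v x))) - (P2 *v (Bn *v x)) \<bullet> (WY *v (Th *v x)) + Eq x"
      unfolding WY_def Eq_def by (rule YP_lemma[OF Szn SYgX SY])
    have ex: "- (t \<bullet> (W1 *v t)) / 2 + (gam / bet * KL (gauss_pdf (Bn *v x) Szn) (gauss_pdf (Xi1 *v t) S21)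
        - 1 / bet * (\<integral>t2. gauss_pdf (Bn *v x) Szn t2 * KL (gauss_pdf (Th *v x) SYgX) (gauss_pdf (P1 *v t + P2 *v t2) SY) \<partial>lborel))
        = h x + E"
      unfolding KL1 YP E_def Mq Nq h_def gb_def[symmetric]
      by (simp add: algebra_simps diff_divide_distrib add_divide_distrib)
    have lhs: "gauss_pdf 0 ST t * exp (gam / bet * KL (gauss_pdf (Bn *v x) Szn) (gauss_pdf (Xi1 *v t) S21)
        - 1 / bet * (\<integral>t2. gauss_pdf (Bn *v x) Szn t2 * KL (gauss_pdf (Th *v x) SYgX) (gauss_pdf (P1 *v t + P2 *v t2) SY) \<partial>lborel))
        = exp (h x + E) / Z1"
      unfolding g0 ex[symmetric] exp_add by simp
    have q: "(t - a x) \<bullet> (Mm *v (t - a x)) = t \<bullet> (Mm *v t) - 2 * (t \<bullet> (Nm *v x)) + a x \<bullet> (Mm *v a x)"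
    proof -
      have "a x \<bullet> (Mm *v t) = t \<bullet> (Mm *v a x)"
        using sym_inner[OF Ms, of t "a x"] by (simp add: inner_commute)
      then show ?thesis
        by (simp add: matrix_vector_mult_diff_distrib inner_diff_left inner_diff_right Ma)
    qed
    have rhs: "gauss_pdf (a x) (matrix_inv Mm) t = exp (- (a x \<bullet> (Mm *v a x)) / 2 + E) / ZM"
      unfolding gauss_pdf_def inv_inv[OF Mi] ZM_def[symmetric] q E_def
      by (simp add: field_simps)
    show "gauss_pdf 0 ST t * exp (gam / bet * KL (gauss_pdf (Bn *v x) Szn) (gauss_pdf (Xi1 *v t) S21)
        - 1 / bet * (\<integral>t2. gauss_pdf (Bn *v x) Szn t2 * KL (gauss_pdf (Th *v x) SYgX) (gauss_pdf (P1 *v t + P2 *v t2) SY) \<partial>lborel))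
       = c x * gauss_pdf (a x) (matrix_inv Mm) t"
      unfolding lhs rhs c_def exp_add using Z1 ZM by (simp add: field_simps)
  qed
  then show ?thesis unfolding a_def Mm_def Nm_def by blast
qed


definition psd :: "real^'n^'n \<Rightarrow> bool" where
  "psd R \<longleftrightarrow> transpose R = R \<and> (\<forall>v. 0 \<le> v \<bullet> (R *v v))"

lemma pd_psd: "pos_def R \<Longrightarrow> psd R"
  unfolding psd_def pos_def_def by (metis inner_zero_left less_eq_real_def)

lemma psd_congr:
  fixes C :: "real^'n^'m" and R :: "real^'n^'n"
  assumes "psd R" shows "psd (C ** R ** transpose C)"
  unfolding psd_def
proof safe
  show "transpose (C ** R ** transpose C) = C ** R ** transpose C"
    using assms by (simp add: psd_def matrix_transpose_mul matrix_mul_assoc)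
next
  fix v
  have "v \<bullet> ((C ** R ** transpose C) *v v) = v \<bullet> ((transpose (transpose C) ** R ** transpose C) *v v)" by simp
  also have "\<dots> = (transpose C *v v) \<bullet> (R *v (transpose C *v v))" by (rule ip_tr3)
  finally show "0 \<le> v \<bullet> ((C ** R ** transpose C) *v v)" using assms by (simp add: psd_def)
qed

lemma pd_add_psd:
  fixes S R :: "real^'n^'n"
  assumes "pos_def S" "psd R" shows "pos_def (R + S)" "pos_def (S + R)"
proof -
  show "pos_def (R + S)"
    unfolding pos_def_def
  proof safe
    show "transpose (R + S) = R + S" using assms by (simp add: transpose_add psd_def pos_def_def)
  next
    fix v :: "real^'n" assume "v \<noteq> 0"
    then have "0 < v \<bullet> (S *v v)" using assms(1) by (simp add: pos_def_def)
    moreover have "0 \<le> v \<bullet> (R *v v)" using assms(2) by (simp add: psd_def)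
    ultimately show "0 < v \<bullet> ((R + S) *v v)" by (simp add: matrix_vector_mult_add_rdistrib inner_add_right)
  qed
  then show "pos_def (S + R)" by (simp add: add.commute)
qed

lemma ST_pd: "pos_def SX \<Longrightarrow> pos_def Sz \<Longrightarrow> pos_def (S_T SX A Sz)"
  unfolding S_T_def by (intro pd_add_psd psd_congr pd_psd)

lemma Pa_pd: "pos_def SX \<Longrightarrow> pos_def Sz \<Longrightarrow> pos_def (matrix_inv SX + transpose A ** matrix_inv Sz ** A)"
  using pd_add_psd(2)[OF pos_def_inv[of SX] psd_congr[OF pd_psd[OF pos_def_inv[of Sz]], of "transpose A"]]
  by simp

lemma XgT_pd: "pos_def SX \<Longrightarrow> pos_def Sz \<Longrightarrow> pos_def (S_XgT SX A Sz)"
  unfolding S_XgT_def by (intro pos_def_inv Pa_pd)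

lemma T2gT1_pd: "pos_def SX \<Longrightarrow> pos_def Sz1 \<Longrightarrow> pos_def Sz2 \<Longrightarrow> pos_def (S_T2gT1 SX A Sz1 B Sz2)"
  unfolding S_T2gT1_def by (intro pd_add_psd psd_congr pd_psd XgT_pd)

lemma mm_add_r: "(A + B) ** (C::real^'a^'b) = A ** C + (B::real^'b^'c) ** C"
  by (simp add: matrix_matrix_mult_def vec_eq_iff sum.distrib distrib_right)

lemma mm_diff_r: "(A - B) ** (C::real^'a^'b) = A ** C - (B::real^'b^'c) ** C"
  by (simp add: matrix_matrix_mult_def vec_eq_iff sum_subtractf left_diff_distrib)

lemma mm_diff_l: "(A::real^'b^'c) ** (B - C) = A ** B - A ** (C::real^'a^'b)"
  by (simp add: matrix_matrix_mult_def vec_eq_iff sum_subtractf right_diff_distrib)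

lemmas mm_norm = matrix_mul_assoc matrix_add_ldistrib mm_add_r mm_diff_r mm_diff_l

lemma cancel_r: "(S::real^'n^'n) ** S' = mat 1 \<Longrightarrow> Y ** S ** S' = (Y::real^'n^'m)"
  by (metis matrix_mul_assoc matrix_mul_rid)


lemma grp_lemma: "(b::'a::ab_group_add) = c + a \<Longrightarrow> m - a + b - c = m"
  by (simp add: algebra_simps)

lemma woodbury:
  fixes SX :: "real^'x^'x" and A :: "real^'x^'a" and Sz :: "real^'a^'a"
  assumes SX: "pos_def SX" and Sz: "pos_def Sz"
  shows "S_XgT SX A Sz = SX - SX ** transpose A ** matrix_inv (S_T SX A Sz) ** A ** SX"
proof -
  define T where "T = S_T SX A Sz"
  have Tpd: "pos_def T" unfolding T_def by (rule ST_pd[OF SX Sz])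
  have TiT: "T ** matrix_inv T = mat 1" by (rule inv_mat(1)[OF pos_def_invertible[OF Tpd]])
  have ZSz: "matrix_inv Sz ** Sz = mat 1" by (rule inv_mat(2)[OF pos_def_invertible[OF Sz]])
  have P0X: "matrix_inv SX ** SX = mat 1" by (rule inv_mat(2)[OF pos_def_invertible[OF SX]])
  have P0X': "matrix_inv SX ** SX ** Y = Y" for Y :: "real^'c^'x" using P0X by simp
  let ?Z = "matrix_inv Sz" and ?iT = "matrix_inv T" and ?tA = "transpose A"
  have k1: "?tA ** ?Z ** T = ?tA ** ?Z ** A ** SX ** ?tA + ?tA"
    unfolding T_def S_T_def by (simp add: mm_norm cancel_r[OF ZSz])
  have k2: "?tA ** ?Z = ?tA ** ?Z ** A ** SX ** ?tA ** ?iT + ?tA ** ?iT"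
  proof -
    have "?tA ** ?Z = ?tA ** ?Z ** T ** ?iT" by (simp add: cancel_r[OF TiT])
    also have "\<dots> = (?tA ** ?Z ** A ** SX ** ?tA + ?tA) ** ?iT" by (simp only: k1)
    also have "\<dots> = ?tA ** ?Z ** A ** SX ** ?tA ** ?iT + ?tA ** ?iT" by (simp only: mm_add_r)
    finally show ?thesis .
  qed
  have k3: "?tA ** ?Z ** A ** SX = ?tA ** ?Z ** A ** SX ** ?tA ** ?iT ** A ** SX + ?tA ** ?iT ** A ** SX"
  proof -
    have "?tA ** ?Z ** A ** SX = (?tA ** ?Z ** A ** SX ** ?tA ** ?iT + ?tA ** ?iT) ** A ** SX"
      using arg_cong[OF k2, of "\<lambda>M. M ** A ** SX"] by (simp only:)
    also have "\<dots> = ?tA ** ?Z ** A ** SX ** ?tA ** ?iT ** A ** SX + ?tA ** ?iT ** A ** SX" by (simp only: mm_add_r)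
    finally show ?thesis .
  qed
  define R where "R = SX - SX ** ?tA ** ?iT ** A ** SX"
  have e: "(matrix_inv SX + ?tA ** ?Z ** A) ** R
      = mat 1 - ?tA ** ?iT ** A ** SX + ?tA ** ?Z ** A ** SX - ?tA ** ?Z ** A ** SX ** ?tA ** ?iT ** A ** SX"
    unfolding R_def by (simp add: mm_norm P0X P0X' algebra_simps)
  have "(matrix_inv SX + ?tA ** ?Z ** A) ** R = mat 1"
    unfolding e by (rule grp_lemma[OF k3])
  then have "matrix_inv (matrix_inv SX + ?tA ** ?Z ** A) = R" by (rule inv_unique(1))
  then show ?thesis unfolding S_XgT_def R_def T_def .
qed


lemma transpose_sym3: "transpose X = X \<Longrightarrow> transpose (B ** X ** transpose A) = A ** X ** transpose (B::real^'x^'b)"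
  by (simp add: matrix_transpose_mul matrix_mul_assoc)

lemma S12_alt:
  fixes SX :: "real^'x^'x" and A :: "real^'x^'a" and B :: "real^'x^'b"
  assumes SX: "pos_def SX" and Sz1: "pos_def Sz1" and Sz2: "pos_def Sz2"
  shows "S_T2gT1 SX B Sz2 A Sz1 = S_T SX A Sz1 - transpose (B ** SX ** transpose A) ** matrix_inv (S_T SX B Sz2) ** (B ** SX ** transpose A)"
proof -
  have t: "transpose (B ** SX ** transpose A) = A ** SX ** transpose B"
    by (rule transpose_sym3[OF pos_def_sym[OF SX]])
  show ?thesis
    unfolding S_T2gT1_def woodbury[OF SX Sz2] t S_T_def
    by (simp add: mm_norm algebra_simps)
qed

lemma K_lemma:
  fixes SX :: "real^'x^'x" and A :: "real^'x^'a" and B :: "real^'x^'b"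
  assumes SX: "pos_def SX" and Sz1: "pos_def Sz1" and Sz2: "pos_def Sz2"
  shows "SX ** transpose A ** matrix_inv (S_T2gT1 SX B Sz2 A Sz1)
      - SX ** transpose B ** matrix_inv (S_T2gT1 SX A Sz1 B Sz2) ** B ** SX ** transpose A ** matrix_inv (S_T SX A Sz1)
     = matrix_inv (matrix_inv SX + transpose B ** matrix_inv Sz2 ** B + transpose A ** matrix_inv Sz1 ** A)
        ** transpose A ** matrix_inv Sz1"
proof -
  define C where "C = B ** SX ** transpose A"
  define T1 where "T1 = S_T SX A Sz1"
  define T2 where "T2 = S_T SX B Sz2"
  define S12 where "S12 = S_T2gT1 SX B Sz2 A Sz1"
  define S21 where "S21 = S_T2gT1 SX A Sz1 B Sz2"
  define Pb where "Pb = matrix_inv SX + transpose B ** matrix_inv Sz2 ** B"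
  define P where "P = Pb + transpose A ** matrix_inv Sz1 ** A"
  define K1 where "K1 = SX ** transpose A ** matrix_inv S12 - SX ** transpose B ** matrix_inv S21 ** B ** SX ** transpose A ** matrix_inv T1"
  have T1pd: "pos_def T1" unfolding T1_def by (rule ST_pd[OF SX Sz1])
  have T2pd: "pos_def T2" unfolding T2_def by (rule ST_pd[OF SX Sz2])
  have S12pd: "pos_def S12" unfolding S12_def by (rule T2gT1_pd[OF SX Sz2 Sz1])
  have S21pd: "pos_def S21" unfolding S21_def by (rule T2gT1_pd[OF SX Sz1 Sz2])
  have Pbpd: "pos_def Pb" unfolding Pb_def by (rule Pa_pd[OF SX Sz2])
  have Ppd: "pos_def P" unfolding P_def
    by (rule pd_add_psd(2)[OF Pbpd psd_congr[OF pd_psd[OF pos_def_inv[OF Sz1]], of "transpose A", simplified]])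
  have iT1: "matrix_inv T1 ** T1 = mat 1" by (rule inv_mat(2)[OF pos_def_invertible[OF T1pd]])
  have iT2: "T2 ** matrix_inv T2 = mat 1" by (rule inv_mat(1)[OF pos_def_invertible[OF T2pd]])
  have iS12: "S12 ** matrix_inv S12 = mat 1" "matrix_inv S12 ** S12 = mat 1"
    using inv_mat[OF pos_def_invertible[OF S12pd]] by auto
  have iS21: "matrix_inv S21 ** S21 = mat 1" by (rule inv_mat(2)[OF pos_def_invertible[OF S21pd]])
  have iPb: "Pb ** matrix_inv Pb = mat 1" by (rule inv_mat(1)[OF pos_def_invertible[OF Pbpd]])
  have iP: "matrix_inv P ** P = mat 1" by (rule inv_mat(2)[OF pos_def_invertible[OF Ppd]])
  have Z1: "matrix_inv Sz1 ** Sz1 = mat 1" by (rule inv_mat(2)[OF pos_def_invertible[OF Sz1]])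
  have tC: "transpose C = A ** SX ** transpose B"
    unfolding C_def by (rule transpose_sym3[OF pos_def_sym[OF SX]])
  have a: "S12 = T1 - transpose C ** matrix_inv T2 ** C"
    unfolding S12_def T1_def T2_def C_def by (rule S12_alt[OF SX Sz1 Sz2])
  have b: "S21 = T2 - C ** matrix_inv T1 ** transpose C"
  proof -
    have "transpose (A ** SX ** transpose B) = C"
      unfolding C_def by (rule transpose_sym3[OF pos_def_sym[OF SX]])
    then show ?thesis
      using S12_alt[OF SX Sz2 Sz1, of A B] unfolding S21_def T1_def T2_def tC by simp
  qed
  have c: "C ** matrix_inv T1 ** S12 = S21 ** matrix_inv T2 ** C"
    unfolding a b by (simp add: mm_norm cancel_r[OF iT1] iT2)
  have d: "matrix_inv S21 ** C ** matrix_inv T1 ** S12 = matrix_inv T2 ** C"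
  proof -
    have "matrix_inv S21 ** C ** matrix_inv T1 ** S12 = matrix_inv S21 ** (C ** matrix_inv T1 ** S12)"
      by (simp add: matrix_mul_assoc)
    also have "\<dots> = matrix_inv S21 ** (S21 ** matrix_inv T2 ** C)" by (simp only: c)
    also have "\<dots> = matrix_inv T2 ** C" by (simp add: matrix_mul_assoc iS21)
    finally show ?thesis .
  qed
  have e: "K1 ** S12 = matrix_inv Pb ** transpose A"
  proof -
    have "K1 ** S12 = SX ** transpose A - SX ** transpose B ** (matrix_inv S21 ** C ** matrix_inv T1 ** S12)"
      unfolding K1_def C_def by (simp add: mm_norm cancel_r[OF iS12(2)])
    also have "\<dots> = SX ** transpose A - SX ** transpose B ** matrix_inv T2 ** B ** SX ** transpose A"
      unfolding d by (simp add: C_def matrix_mul_assoc)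
    also have "\<dots> = matrix_inv Pb ** transpose A"
      using woodbury[OF SX Sz2, of B] unfolding S_XgT_def Pb_def[symmetric] T2_def[symmetric]
      by (simp add: mm_norm)
    finally show ?thesis .
  qed
  have f: "P ** matrix_inv Pb ** transpose A = transpose A ** matrix_inv Sz1 ** S12"
  proof -
    have "S12 = A ** matrix_inv Pb ** transpose A + Sz1"
      unfolding S12_def S_T2gT1_def S_XgT_def Pb_def ..
    then show ?thesis unfolding P_def
      by (simp add: mm_norm iPb cancel_r[OF iPb] cancel_r[OF Z1] algebra_simps)
  qed
  have g: "P ** K1 = transpose A ** matrix_inv Sz1"
  proof -
    have "P ** K1 = P ** (K1 ** S12) ** matrix_inv S12" by (simp add: matrix_mul_assoc cancel_r[OF iS12(1)])
    also have "\<dots> = transpose A ** matrix_inv Sz1 ** S12 ** matrix_inv S12"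
      unfolding e by (simp only: f matrix_mul_assoc)
    also have "\<dots> = transpose A ** matrix_inv Sz1" by (simp add: cancel_r[OF iS12(1)])
    finally show ?thesis .
  qed
  have "K1 = matrix_inv P ** transpose A ** matrix_inv Sz1"
  proof -
    have "K1 = matrix_inv P ** (P ** K1)" by (simp add: matrix_mul_assoc iP)
    then show ?thesis unfolding g by (simp add: matrix_mul_assoc)
  qed
  then show ?thesis unfolding K1_def P_def Pb_def S12_def S21_def T1_def .
qed


lemma grp2: "(x::'a::ab_group_add) = p + u + w \<Longrightarrow> x - u - w = p"
  by (simp add: algebra_simps)

lemma XgT12_eq:
  fixes SX :: "real^'x^'x" and A :: "real^'x^'a" and B :: "real^'x^'b"
  assumes SX: "pos_def SX" and Sz1: "pos_def Sz1" and Sz2: "pos_def Sz2"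
  shows "S_XgT12 SX A Sz1 B Sz2 = matrix_inv (matrix_inv SX + transpose A ** matrix_inv Sz1 ** A + transpose B ** matrix_inv Sz2 ** B)"
proof -
  define P where "P = matrix_inv SX + transpose A ** matrix_inv Sz1 ** A + transpose B ** matrix_inv Sz2 ** B"
  have PB: "matrix_inv SX + transpose B ** matrix_inv Sz2 ** B + transpose A ** matrix_inv Sz1 ** A = P"
    unfolding P_def by (simp add: algebra_simps)
  have Ppd: "pos_def P" unfolding PB[symmetric]
    by (rule pd_add_psd(2)[OF Pa_pd[OF SX Sz2] psd_congr[OF pd_psd[OF pos_def_inv[OF Sz1]], of "transpose A", simplified]])
  have iP: "matrix_inv P ** P = mat 1" by (rule inv_mat(2)[OF pos_def_invertible[OF Ppd]])
  have P0X: "matrix_inv SX ** SX = mat 1" by (rule inv_mat(2)[OF pos_def_invertible[OF SX]])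
  define K1e where "K1e = SX ** transpose A ** matrix_inv (S_T2gT1 SX B Sz2 A Sz1)
      - SX ** transpose B ** matrix_inv (S_T2gT1 SX A Sz1 B Sz2) ** B ** SX ** transpose A ** matrix_inv (S_T SX A Sz1)"
  define K2e where "K2e = SX ** transpose B ** matrix_inv (S_T2gT1 SX A Sz1 B Sz2)
      - SX ** transpose A ** matrix_inv (S_T2gT1 SX B Sz2 A Sz1) ** A ** SX ** transpose B ** matrix_inv (S_T SX B Sz2)"
  have K1: "K1e = matrix_inv P ** transpose A ** matrix_inv Sz1"
    unfolding K1e_def K_lemma[OF SX Sz1 Sz2] PB ..
  have K2: "K2e = matrix_inv P ** transpose B ** matrix_inv Sz2"
    unfolding K2e_def K_lemma[OF SX Sz2 Sz1] P_def ..
  have h2: "S_XgT12 SX A Sz1 B Sz2 = SX - K1e ** A ** SX - K2e ** B ** SX"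
    unfolding S_XgT12_def K1e_def K2e_def by (simp add: mm_norm algebra_simps)
  have h1: "SX = matrix_inv P + matrix_inv P ** transpose A ** matrix_inv Sz1 ** A ** SX
       + matrix_inv P ** transpose B ** matrix_inv Sz2 ** B ** SX"
  proof -
    have "SX = matrix_inv P ** P ** SX" using iP by simp
    also have "\<dots> = matrix_inv P + matrix_inv P ** transpose A ** matrix_inv Sz1 ** A ** SX
       + matrix_inv P ** transpose B ** matrix_inv Sz2 ** B ** SX"
      unfolding P_def by (simp add: mm_norm cancel_r[OF P0X])
    finally show ?thesis .
  qed
  show ?thesis unfolding h2 K1 K2 P_def[symmetric] by (rule grp2[OF h1])
qed

lemma YgT12_pd:
  fixes SX :: "real^'x^'x" and A :: "real^'x^'a" and B :: "real^'x^'b"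
  assumes SX: "pos_def SX" and Sz1: "pos_def Sz1" and Sz2: "pos_def Sz2" and SY: "pos_def (S_YgX SX SY SYX)"
  shows "pos_def (S_YgT12 SX SY SYX A Sz1 B Sz2)"
proof -
  have Ppd: "pos_def (matrix_inv SX + transpose A ** matrix_inv Sz1 ** A + transpose B ** matrix_inv Sz2 ** B)"
    by (rule pd_add_psd(2)[OF Pa_pd[OF SX Sz1] psd_congr[OF pd_psd[OF pos_def_inv[OF Sz2]], of "transpose B", simplified]])
  show ?thesis
    unfolding S_YgT12_def XgT12_eq[OF SX Sz1 Sz2]
    by (rule pd_add_psd(1)[OF SY psd_congr[OF pd_psd[OF pos_def_inv[OF Ppd]]]])
qed

lemma YgT12_swap: "S_YgT12 SX SY SYX B Sz2 A Sz1 = S_YgT12 SX SY SYX A Sz1 B Sz2"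
proof -
  have "S_XgT12 SX B Sz2 A Sz1 = S_XgT12 SX A Sz1 B Sz2"
    unfolding S_XgT12_def by (simp add: algebra_simps)
  then show ?thesis unfolding S_YgT12_def by simp
qed

theorem theorem2:
  fixes SX :: "real^'x^'x" and SY :: "real^'y^'y" and SYX :: "real^'x^'y"
    and A :: "real^'x^'a" and Sz1 :: "real^'a^'a"
    and B :: "real^'x^'b" and Sz2 :: "real^'b^'b"
    and bet lam gam :: real
  assumes SX_pd: "pos_def SX"
    and SYgX_pd: "pos_def (S_YgX SX SY SYX)"
    and Sz1_pd: "pos_def Sz1" and Sz2_pd: "pos_def Sz2"
    and bet: "bet > 0" and lam: "lam > 0" and gam: "gam \<ge> 0"
    and P1_pd: "pos_def (matrix_inv (S_T SX A Sz1)
        - (gam / bet) *\<^sub>R (transpose (Xi SX A Sz1 B) ** matrix_inv (S_T2gT1 SX A Sz1 B Sz2) ** Xi SX A Sz1 B)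
        + (1 / bet) *\<^sub>R (transpose (Psi SX SYX A Sz1 B Sz2) ** matrix_inv (S_YgT12 SX SY SYX A Sz1 B Sz2)
                          ** Psi SX SYX A Sz1 B Sz2))"
    and P2_pd: "pos_def (matrix_inv (S_T SX B Sz2)
        - (gam / lam) *\<^sub>R (transpose (Xi SX B Sz2 A) ** matrix_inv (S_T2gT1 SX B Sz2 A Sz1) ** Xi SX B Sz2 A)
        + (1 / lam) *\<^sub>R (transpose (Psi SX SYX B Sz2 A Sz1) ** matrix_inv (S_YgT12 SX SY SYX A Sz1 B Sz2)
                          ** Psi SX SYX B Sz2 A Sz1))"
  shows
    "let Th = Theta SX SYX;
         Xi1 = Xi SX A Sz1 B; Xi2 = Xi SX B Sz2 A;
         Psi1 = Psi SX SYX A Sz1 B Sz2; Psi2 = Psi SX SYX B Sz2 A Sz1;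
         iST1 = matrix_inv (S_T SX A Sz1); iST2 = matrix_inv (S_T SX B Sz2);
         iST2gT1 = matrix_inv (S_T2gT1 SX A Sz1 B Sz2);
         iST1gT2 = matrix_inv (S_T2gT1 SX B Sz2 A Sz1);
         iSY = matrix_inv (S_YgT12 SX SY SYX A Sz1 B Sz2);
         iSz1' = iST1 - (gam / bet) *\<^sub>R (transpose Xi1 ** iST2gT1 ** Xi1)
                      + (1 / bet) *\<^sub>R (transpose Psi1 ** iSY ** Psi1);
         Sz1' = matrix_inv iSz1';
         A' = Sz1' ** (- (gam / bet) *\<^sub>R (transpose Xi1 ** iST2gT1 ** B)
                       + (1 / bet) *\<^sub>R (transpose Psi1 ** iSY ** (Th - Psi2 ** B)));
         iSz2' = iST2 - (gam / lam) *\<^sub>R (transpose Xi2 ** iST1gT2 ** Xi2)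
                      + (1 / lam) *\<^sub>R (transpose Psi2 ** iSY ** Psi2);
         Sz2' = matrix_inv iSz2';
         B' = Sz2' ** (- (gam / lam) *\<^sub>R (transpose Xi2 ** iST1gT2 ** A')
                       + (1 / lam) *\<^sub>R (transpose Psi2 ** iSY ** (Th - Psi1 ** A')))
     in (\<exists>c :: real^'x \<Rightarrow> real. \<forall>x. c x > 0 \<and>
            (\<forall>t1. sc_rhs SX SY SYX A Sz1 B Sz2 B Sz2 bet gam x t1
                   = c x * gauss_pdf (A' *v x) Sz1' t1))
      \<and> (\<exists>c :: real^'x \<Rightarrow> real. \<forall>x. c x > 0 \<and>
            (\<forall>t2. sc_rhs SX SY SYX B Sz2 A Sz1 A' Sz1' lam gam x t2
                   = c x * gauss_pdf (B' *v x) Sz2' t2))"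
proof -
  have ST1: "pos_def (S_T SX A Sz1)" by (rule ST_pd[OF SX_pd Sz1_pd])
  have ST2: "pos_def (S_T SX B Sz2)" by (rule ST_pd[OF SX_pd Sz2_pd])
  have S21: "pos_def (S_T2gT1 SX A Sz1 B Sz2)" by (rule T2gT1_pd[OF SX_pd Sz1_pd Sz2_pd])
  have S12: "pos_def (S_T2gT1 SX B Sz2 A Sz1)" by (rule T2gT1_pd[OF SX_pd Sz2_pd Sz1_pd])
  have SYp: "pos_def (S_YgT12 SX SY SYX A Sz1 B Sz2)" by (rule YgT12_pd[OF SX_pd Sz1_pd Sz2_pd SYgX_pd])
  have swap: "S_YgT12 SX SY SYX B Sz2 A Sz1 = S_YgT12 SX SY SYX A Sz1 B Sz2" by (rule YgT12_swap)
  have Sz1': "pos_def (matrix_inv (matrix_inv (S_T SX A Sz1)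
        - (gam / bet) *\<^sub>R (transpose (Xi SX A Sz1 B) ** matrix_inv (S_T2gT1 SX A Sz1 B Sz2) ** Xi SX A Sz1 B)
        + (1 / bet) *\<^sub>R (transpose (Psi SX SYX A Sz1 B Sz2) ** matrix_inv (S_YgT12 SX SY SYX A Sz1 B Sz2)
                          ** Psi SX SYX A Sz1 B Sz2)))"
    by (rule pos_def_inv[OF P1_pd])
  show ?thesis
    unfolding Let_def sc_rhs_def swap
    apply (rule conjI)
     apply (rule sc_generic[OF ST1 S21 Sz2_pd SYgX_pd SYp bet P1_pd])
    apply (rule sc_generic[OF ST2 S12 Sz1' SYgX_pd SYp lam P2_pd])
    done
qed


end
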